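(* Assume (A1)–(A4), let $b$ be consistent, $\delta>0$, $\tau>1$, $\|b^\delta-b\|\le\delta$, and let $k_\delta$ be the first index $k\ge1$ with $\rho_1^2\|Ax_k^\delta-b^\delta\|^2+\rho_2^2\|Wx_k^\delta-y_k^\delta\|^2\le\max(\rho_1^2,\rho_2^2)\tau^2\delta^2$. Then there exist constants $c,C>0$ depending only on $\rho_2,\tau,c_0$ such that for every integer $1\le m<k_\delta-1$ and every feasible point $(\hat x,\hat y)$, $$D_{\mu_{k_\delta}^\delta}f(\hat y,y_{k_\delta}^\delta)+cE_{k_\delta}^\delta\le D_{\mu_m^\delta}f(\hat y,y_m^\delta)+\max\{\rho_1,\rho_2\}\tau\delta^2+C\|W(\hat x-x_m^\delta)\|^2+CE_m^\delta+C\|s_m^\delta\|^2+C\big|\langle y_{m-1}^\delta-y_m^\delta,W(\hat x-x_{m+1}^\delta)\rangle\big|$$ and $$\big|\langle\mu_{k_\delta}^\delta,y_{k_\delta}^\delta-\hat y\rangle\big|\le\big|\langle\mu_m^\delta,y_{k_\delta}^\delta-\hat y\rangle\big|+\max\{\rho_1,\rho_2\}\tau\delta^2+C\sum_{k=m}^{k_\delta}E_k^\delta+C\|W(x_{k_\delta}^\delta-\hat x)\|^2.$$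
   Context: $\mathcal X,\mathcal Y,\mathcal H$ are real Hilbert spaces. Standing assumptions: (A1) $A:\mathcal X\to\mathcal H$ is bounded linear. (A2) $f:\mathcal Y\to(-\infty,\infty]$ is proper, lower semicontinuous and strongly convex with constant $c_0>0$: $f(ty_1+(1-t)y_2)+c_0t(1-t)\|y_1-y_2\|^2\le tf(y_1)+(1-t)f(y_2)$ for all $y_1,y_2$, $t\in[0,1]$. (A3) $W:\mathscr D(W)\subset\mathcal X\to\mathcal Y$ is a densely defined closed linear operator. (A4) There is $c_1>0$ with $\|Ax\|^2+\|Wx\|^2\ge c_1\|x\|^2$ for all $x\in\mathscr D(W)$. $\mathscr D(f)=\{y:f(y)<\infty\}$; $b$ is consistent if $b=Ax$ for some $x\in\mathscr D(W)$ with $Wx\in\mathscr D(f)$. A feasible point is a pair $(\hat x,\hat y)$ with $\hat x\in\mathscr D(W)$, $\hat y\in\mathscr D(f)$, $A\hat x=b$, $W\hat x=\hat y$. Noisy ADMM: fix $\rho_1,\rho_2>0$ and initial $y_0^\delta\in\mathcal Y$, $\lambda_0^\delta\in\mathcal H$, $\mu_0^\delta\in\mathcal Y$. For $k=0,1,\dots$: $x_{k+1}^\delta=\arg\min_{x\in\mathscr D(W)}\{\langle\lambda_k^\delta,Ax\rangle+\langle\mu_k^\delta,Wx\rangle+\frac{\rho_1}{2}\|Ax-b^\delta\|^2+\frac{\rho_2}{2}\|Wx-y_k^\delta\|^2\}$, $y_{k+1}^\delta=\arg\min_{y\in\mathcal Y}\{f(y)-\langle\mu_k^\delta,y\rangle+\frac{\rho_2}{2}\|Wx_{k+1}^\delta-y\|^2\}$,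 $\lambda_{k+1}^\delta=\lambda_k^\delta+\rho_1(Ax_{k+1}^\delta-b^\delta)$, $\mu_{k+1}^\delta=\mu_k^\delta+\rho_2(Wx_{k+1}^\delta-y_{k+1}^\delta)$. (These minimizers exist and are unique; $\mu_k^\delta\in\partial f(y_k^\delta)$ for $k\ge1$.) Notation: $r_k^\delta=Ax_k^\delta-b^\delta$, $s_k^\delta=Wx_k^\delta-y_k^\delta$, $E_k^\delta=\rho_1\|r_k^\delta\|^2+\rho_2\|s_k^\delta\|^2+\rho_2\|y_k^\delta-y_{k-1}^\delta\|^2$ for $k\ge1$. Bregman distance: for $y$ with $\mu\in\partial f(y)$, $D_\mu f(\bar y,y)=f(\bar y)-f(y)-\langle\mu,\bar y-y\rangle$. *)

theory Defs
  imports "HOL-Analysis.Analysis"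
begin

definition proper_fun :: "('y \<Rightarrow> ereal) \<Rightarrow> bool" where
  "proper_fun f \<longleftrightarrow> (\<forall>y. f y \<noteq> -\<infinity>) \<and> (\<exists>y. f y \<noteq> \<infinity>)"

definition lsc_fun :: "('y::topological_space \<Rightarrow> ereal) \<Rightarrow> bool" where
  "lsc_fun f \<longleftrightarrow> (\<forall>y. f y \<le> Liminf (at y) f)"

definition strongly_convex :: "('y::real_normed_vector \<Rightarrow> ereal) \<Rightarrow> real \<Rightarrow> bool" where
  "strongly_convex f c0 \<longleftrightarrow>
     (\<forall>y1 y2 t. 0 \<le> t \<and> t \<le> 1 \<longrightarrow>
        f (t *\<^sub>R y1 + (1 - t) *\<^sub>R y2) + ereal (c0 * t * (1 - t) * (norm (y1 - y2))\<^sup>2)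
          \<le> ereal t * f y1 + ereal (1 - t) * f y2)"

definition effdom :: "('y \<Rightarrow> ereal) \<Rightarrow> 'y set" where
  "effdom f = {y. f y < \<infinity>}"

definition subdiff :: "('y::real_inner \<Rightarrow> ereal) \<Rightarrow> 'y \<Rightarrow> 'y set" where
  "subdiff f y = {\<mu>. f y < \<infinity> \<and> (\<forall>z. f y + ereal (inner \<mu> (z - y)) \<le> f z)}"

definition bregman :: "('y::real_inner \<Rightarrow> ereal) \<Rightarrow> 'y \<Rightarrow> 'y \<Rightarrow> 'y \<Rightarrow> ereal" where
  "bregman f \<mu> ybar y = f ybar - f y - ereal (inner \<mu> (ybar - y))"

definition dd_closed_linear_op :: "'x::real_normed_vector set \<Rightarrow> ('x \<Rightarrow> 'y::real_normed_vector) \<Rightarrow> bool" where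
  "dd_closed_linear_op D W \<longleftrightarrow>
     subspace D \<and> closure D = UNIV \<and>
     (\<forall>x\<in>D. \<forall>z\<in>D. W (x + z) = W x + W z) \<and>
     (\<forall>x\<in>D. \<forall>a. W (a *\<^sub>R x) = a *\<^sub>R W x) \<and>
     closed {(x, W x) | x. x \<in> D}"

definition noisy_admm ::
  "('x::real_inner \<Rightarrow> 'h::real_inner) \<Rightarrow> 'x set \<Rightarrow> ('x \<Rightarrow> 'y::real_inner) \<Rightarrow> ('y \<Rightarrow> ereal)
   \<Rightarrow> real \<Rightarrow> real \<Rightarrow> 'h
   \<Rightarrow> (nat \<Rightarrow> 'x) \<Rightarrow> (nat \<Rightarrow> 'y) \<Rightarrow> (nat \<Rightarrow> 'h) \<Rightarrow> (nat \<Rightarrow> 'y) \<Rightarrow> bool" where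
  "noisy_admm A D W f \<rho>1 \<rho>2 b\<delta> xs ys lam mu \<longleftrightarrow>
     (\<forall>k. xs (Suc k) \<in> D \<and>
        (\<forall>x\<in>D. inner (lam k) (A (xs (Suc k))) + inner (mu k) (W (xs (Suc k)))
                 + \<rho>1 / 2 * (norm (A (xs (Suc k)) - b\<delta>))\<^sup>2
                 + \<rho>2 / 2 * (norm (W (xs (Suc k)) - ys k))\<^sup>2
               \<le> inner (lam k) (A x) + inner (mu k) (W x)
                 + \<rho>1 / 2 * (norm (A x - b\<delta>))\<^sup>2
                 + \<rho>2 / 2 * (norm (W x - ys k))\<^sup>2)) \<and>
     (\<forall>k. \<forall>y. f (ys (Suc k)) + ereal (- inner (mu k) (ys (Suc k))
                 + \<rho>2 / 2 * (norm (W (xs (Suc k)) - ys (Suc k)))\<^sup>2)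
               \<le> f y + ereal (- inner (mu k) y + \<rho>2 / 2 * (norm (W (xs (Suc k)) - y))\<^sup>2)) \<and>
     (\<forall>k. lam (Suc k) = lam k + \<rho>1 *\<^sub>R (A (xs (Suc k)) - b\<delta>)) \<and>
     (\<forall>k. mu (Suc k) = mu k + \<rho>2 *\<^sub>R (W (xs (Suc k)) - ys (Suc k)))"

text \<open>E_k = rho1 |r_k|^2 + rho2 |s_k|^2 + rho2 |y_k - y_(k-1)|^2 (used for k >= 1).\<close>
definition admm_E ::
  "('x \<Rightarrow> 'h::real_normed_vector) \<Rightarrow> ('x \<Rightarrow> 'y::real_normed_vector) \<Rightarrow> real \<Rightarrow> real \<Rightarrow> 'h
   \<Rightarrow> (nat \<Rightarrow> 'x) \<Rightarrow> (nat \<Rightarrow> 'y) \<Rightarrow> nat \<Rightarrow> real" where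
  "admm_E A W \<rho>1 \<rho>2 b\<delta> xs ys k =
     \<rho>1 * (norm (A (xs k) - b\<delta>))\<^sup>2 + \<rho>2 * (norm (W (xs k) - ys k))\<^sup>2
     + \<rho>2 * (norm (ys k - ys (k - 1)))\<^sup>2"

end

theory Submission imports Defs begin

lemma alg_sg:
  fixes z ys a mu :: "'a::real_inner" and Fz Fy Fyt t c0 r2 :: real
  assumes t: "t = c0/(2*c0+r2)" and c0: "c0>0" and r2: "r2>0"
  and mn: "Fy + (- inner mu ys + r2/2 * (norm (a - ys))^2) \<le> Fyt + (- inner mu (t *\<^sub>R z + (1-t) *\<^sub>R ys) + r2/2 * (norm (a - (t *\<^sub>R z + (1-t) *\<^sub>R ys)))^2)"
  and sc: "Fyt + c0*t*(1-t)*(norm (z - ys))^2 \<le> t*Fz + (1-t)*Fy"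
  shows "Fy + inner (mu + r2 *\<^sub>R (a - ys)) (z - ys) + c0/2*(norm (z-ys))^2 \<le> Fz"
proof -
  define v where "v = z - ys"
  have yt: "t *\<^sub>R z + (1-t) *\<^sub>R ys = ys + t *\<^sub>R v" by (simp add: v_def algebra_simps)
  have e1: "inner mu (ys + t *\<^sub>R v) = inner mu ys + t * inner mu v" by (simp add: inner_add_right)
  have e2: "(norm (a - (ys + t *\<^sub>R v)))^2 = (norm (a - ys))^2 - 2*t*inner (a-ys) v + t^2 * (norm v)^2"
    unfolding power2_norm_eq_inner
    by (simp add: inner_diff_left inner_diff_right inner_add_left inner_add_right inner_commute algebra_simps power2_eq_square)
  have P: "inner (mu + r2 *\<^sub>R (a - ys)) v = inner mu v + r2 * inner (a-ys) v" by (simp add: inner_add_left)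
  have tpos: "t > 0" using t c0 r2 by simp
  have key: "c0*(1-t) - r2*t/2 = c0/2" using t c0 r2 by (simp add: field_simps)
  have h1: "Fy \<le> Fyt - t*inner mu v - r2*t*inner (a-ys) v + r2/2*t^2*(norm v)^2"
    using mn unfolding yt e1 e2 by (simp add: algebra_simps)
  have h2: "Fyt \<le> t*Fz + (1-t)*Fy - c0*t*(1-t)*(norm v)^2" using sc v_def by simp
  have "t * Fy \<le> t*Fz - t*(inner mu v + r2*inner (a-ys) v) - t*(c0*(1-t) - r2*t/2)*(norm v)^2"
    using h1 h2 by (simp add: algebra_simps power2_eq_square)
  hence "t * Fy \<le> t*(Fz - (inner mu v + r2*inner (a-ys) v) - c0/2*(norm v)^2)"
    unfolding key by (simp add: algebra_simps)
  hence "Fy \<le> Fz - (inner mu v + r2*inner (a-ys) v) - c0/2*(norm v)^2"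
    using tpos by simp
  thus ?thesis using P v_def by simp
qed



lemma alg_zero:
  fixes L c :: real
  assumes c: "c \<ge> 0" and h: "\<And>t. 0 \<le> t*L + t^2*c"
  shows "L = 0"
proof -
  define t where "t = -L/(c+1)"
  have k: "t*(c+1) = -L" using c unfolding t_def by simp
  have "(c+1)^2*(t*L + t^2*c) = (c+1)*(t*(c+1))*L + (t*(c+1))^2*c" by (simp add: algebra_simps power2_eq_square)
  also have "\<dots> = -(L^2)" unfolding k by (simp add: algebra_simps power2_eq_square)
  finally have e: "(c+1)^2*(t*L + t^2*c) = -(L^2)" .
  have "0 \<le> (c+1)^2*(t*L + t^2*c)" using h[of t] by simp
  hence "L^2 \<le> 0" using e by simp
  thus ?thesis by simp
qed

lemma alg_quad:
  fixes a0 aw bd lam :: "'h::real_inner" and b0 bw mu y :: "'y::real_inner"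
  shows "inner lam (a0 + t *\<^sub>R aw) + inner mu (b0 + t *\<^sub>R bw) + r1/2*(norm (a0 + t *\<^sub>R aw - bd))^2 + r2/2*(norm (b0 + t *\<^sub>R bw - y))^2
    = (inner lam a0 + inner mu b0 + r1/2*(norm (a0 - bd))^2 + r2/2*(norm (b0 - y))^2)
      + t*(inner lam aw + inner mu bw + r1*inner (a0 - bd) aw + r2*inner (b0 - y) bw)
      + t^2*(r1/2*(norm aw)^2 + r2/2*(norm bw)^2)"
  unfolding power2_norm_eq_inner
  by (simp add: inner_diff_left inner_diff_right inner_add_left inner_add_right inner_commute algebra_simps power2_eq_square)

lemma alg_E:
  fixes r r' :: "'h::real_inner" and s s' u u' :: "'y::real_inner"
  assumes h: "r1 * inner r' (r' - r) + r2 * inner (s' + u' - u) (s' - s + u') = 0" and r1: "r1 > 0"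
  shows "r1*(norm r')^2 + r2*(norm s')^2 + r2*(norm u')^2 + r2*(norm (s' - s + u' - u))^2 + 2*r2*inner s' u'
     \<le> r1*(norm r)^2 + r2*(norm s)^2 + r2*(norm u)^2"
proof -
  have i1: "2*inner r' (r' - r) = (norm r')^2 - (norm r)^2 + (norm (r'-r))^2"
    unfolding power2_norm_eq_inner
    by (simp add: inner_diff_left inner_diff_right inner_commute algebra_simps)
  have i2: "2*inner (s' + u' - u) (s' - s + u') = (norm s')^2 - (norm s)^2 + (norm u')^2 - (norm u)^2 + (norm (s' - s + u' - u))^2 + 2*inner s' u'"
    unfolding power2_norm_eq_inner
    by (simp add: inner_diff_left inner_diff_right inner_add_left inner_add_right inner_commute algebra_simps)
  have "0 = r1 * (2*inner r' (r' - r)) + r2 * (2*inner (s' + u' - u) (s' - s + u'))" using h by (simp add: algebra_simps)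
  also have "\<dots> = r1*((norm r')^2 - (norm r)^2 + (norm (r'-r))^2) + r2*((norm s')^2 - (norm s)^2 + (norm u')^2 - (norm u)^2 + (norm (s' - s + u' - u))^2 + 2*inner s' u')"
    by (simp only: i1 i2)
  finally have eq: "0 = \<dots>" .
  have "r1*(norm (r'-r))^2 \<ge> 0" using r1 by simp
  thus ?thesis using eq by (simp add: algebra_simps)
qed

lemma alg_step:
  fixes r' beta :: "'h::real_inner" and mu mu' y y' yh s' u u' w' :: "'y::real_inner"
  assumes Z: "r1 * inner r' (beta - r') + r2 * inner (s' + u' - u) w' = 0"
  and mu': "mu' = mu + r2 *\<^sub>R s'" and e: "yh - y' = w' + s'" and u': "u' = y' - y"
  shows "Fyh - Fy' - inner mu' (yh - y') = (Fyh - Fy - inner mu (yh - y)) - (Fy' - Fy - inner mu u')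
     - r2*(norm s')^2 - r1*(norm r')^2 + r1*inner r' beta + r2*inner u' w' - r2*inner u w'"
proof -
  have a: "inner mu' (yh - y') = inner mu (yh - y') + r2*inner s' w' + r2*(norm s')^2"
    unfolding mu' e by (simp add: inner_add_left inner_add_right power2_norm_eq_inner)
  have b: "inner mu (yh - y') = inner mu (yh - y) - inner mu u'"
    unfolding u' by (simp add: inner_diff_right)
  have c: "r2*inner s' w' = - r1*inner r' beta + r1*(norm r')^2 - r2*inner u' w' + r2*inner u w'"
    using Z unfolding power2_norm_eq_inner by (simp add: inner_diff_left inner_diff_right inner_add_left algebra_simps)
  show ?thesis using a b c by (simp add: algebra_simps)
qed



lemma max_sq: fixes a b :: real assumes "a > 0" "b > 0" shows "max (a^2) (b^2) = (max a b)^2"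
proof (cases "a \<le> b")
  case True
  have "a^2 \<le> b^2" using True assms by (simp add: power_mono)
  thus ?thesis using True by (simp add: max_def)
next
  case False hence ba: "b \<le> a" by simp
  have "b^2 \<le> a^2" using ba assms by (simp add: power_mono)
  thus ?thesis using ba by (simp add: max_def)
qed

lemma disc1:
  fixes r1 r2 tau delta nr ns :: real
  assumes r1: "r1 > 0" and r2: "r2 > 0" and tau: "tau > 1" and d: "delta > 0" and nr: "nr \<ge> 0" and ns: "ns \<ge> 0"
  and P: "r1^2*nr^2 + r2^2*ns^2 > max (r1^2) (r2^2) * tau^2 * delta^2"
  shows "r1*nr*delta*tau \<le> r1*nr^2 + r2*ns^2"
proof -
  define M where "M = max r1 r2"
  have M: "M > 0" "r1 \<le> M" "r2 \<le> M" using r1 r2 by (auto simp: M_def)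
  have Msq: "max (r1^2) (r2^2) = M^2" unfolding M_def using r1 r2 by (rule max_sq)
  define PP where "PP = r1^2*nr^2 + r2^2*ns^2"
  have P': "(M*tau*delta)^2 < PP" using P unfolding Msq PP_def by (simp add: power_mult_distrib)
  have a: "(r1*nr)^2 \<le> PP" unfolding PP_def by (simp add: power_mult_distrib)
  have PPn: "PP \<ge> 0" unfolding PP_def by simp
  have "(r1*nr*(M*tau*delta))^2 = (r1*nr)^2 * (M*tau*delta)^2" by (simp add: power_mult_distrib)
  also have "\<dots> \<le> PP * PP" using a P' PPn by (intro mult_mono) auto
  also have "\<dots> = PP^2" by (simp add: power2_eq_square)
  finally have sq: "(r1*nr*(M*tau*delta))^2 \<le> PP^2" .
  have l1: "r1*nr*(M*tau*delta) \<le> PP" using power2_le_imp_le[OF sq PPn] .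
  have "r1^2*nr^2 \<le> M*r1*nr^2"
  proof -
    have "r1*r1 \<le> M*r1" using M r1 by (intro mult_right_mono) auto
    thus ?thesis by (intro mult_right_mono) (auto simp: power2_eq_square)
  qed
  moreover have "r2^2*ns^2 \<le> M*r2*ns^2"
  proof -
    have "r2*r2 \<le> M*r2" using M r2 by (intro mult_right_mono) auto
    thus ?thesis by (intro mult_right_mono) (auto simp: power2_eq_square)
  qed
  ultimately have l2: "PP \<le> M*(r1*nr^2 + r2*ns^2)" unfolding PP_def by (simp add: algebra_simps)
  have "M*(r1*nr*delta*tau) \<le> M*(r1*nr^2 + r2*ns^2)" using l1 l2 by (simp add: algebra_simps)
  thus ?thesis using M by simp
qed

lemma disc2:
  fixes r1 r2 tau delta nr ns :: real
  assumes r1: "r1 > 0" and r2: "r2 > 0" and tau: "tau > 1" and d: "delta > 0" and nr: "nr \<ge> 0"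
  and P: "r1^2*nr^2 + r2^2*ns^2 \<le> max (r1^2) (r2^2) * tau^2 * delta^2"
  shows "r1*nr*delta \<le> max r1 r2 * tau * delta^2"
proof -
  define M where "M = max r1 r2"
  have M: "M > 0" using r1 r2 by (auto simp: M_def)
  have Msq: "max (r1^2) (r2^2) = M^2" unfolding M_def using r1 r2 by (rule max_sq)
  have e1: "(r1*nr)^2 = r1^2*nr^2" by (rule power_mult_distrib)
  have e2: "(M*tau*delta)^2 = M^2*tau^2*delta^2" by (simp only: power_mult_distrib)
  have z: "0 \<le> r2^2*ns^2" by simp
  have "(r1*nr)^2 \<le> (M*tau*delta)^2" unfolding e1 e2 using P z unfolding Msq by linarith
  moreover have "0 \<le> M*tau*delta" using M tau d by simp
  ultimately have "r1*nr \<le> M*tau*delta" by (rule power2_le_imp_le)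
  hence "r1*nr*delta \<le> M*tau*delta*delta" using d by (intro mult_right_mono) auto
  also have "M*tau*delta*delta = M*tau*delta^2" by (simp add: power2_eq_square)
  finally show ?thesis unfolding M_def .
qed



locale admm =
  fixes A :: "'x::real_inner \<Rightarrow> 'h::real_inner" and D :: "'x set" and W :: "'x \<Rightarrow> 'y::real_inner"
    and f :: "'y \<Rightarrow> ereal" and r1 r2 :: real and bd :: 'h
    and xs :: "nat \<Rightarrow> 'x" and ys :: "nat \<Rightarrow> 'y" and lam :: "nat \<Rightarrow> 'h" and mu :: "nat \<Rightarrow> 'y" and c0 :: real
  assumes A_lin: "bounded_linear A" and prp: "proper_fun f" and sconv: "strongly_convex f c0"
    and Wop: "dd_closed_linear_op D W" and r1: "r1 > 0" and r2: "r2 > 0" and c0: "c0 > 0"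
    and adm: "noisy_admm A D W f r1 r2 bd xs ys lam mu"
begin

definition "F y = real_of_ereal (f y)"
definition "r k = A (xs k) - bd"
definition "s k = W (xs k) - ys k"
definition "u k = ys k - ys (k - 1)"
definition "EE k = admm_E A W r1 r2 bd xs ys k"

lemma EE_alt: "EE k = r1*(norm (r k))^2 + r2*(norm (s k))^2 + r2*(norm (u k))^2"
  by (simp add: EE_def admm_E_def r_def s_def u_def)

lemma EE_nn: "EE k \<ge> 0" using r1 r2 unfolding EE_alt by simp

lemma EE_r: "r1*(norm (r k))^2 \<le> EE k" using r1 r2 unfolding EE_alt by simp
lemma EE_s: "r2*(norm (s k))^2 \<le> EE k" using r1 r2 unfolding EE_alt by simp
lemma EE_u: "r2*(norm (u k))^2 \<le> EE k" using r1 r2 unfolding EE_alt by simp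

lemma xs_D: "xs (Suc k) \<in> D" using adm unfolding noisy_admm_def by blast
lemma xs_D': "k \<ge> 1 \<Longrightarrow> xs k \<in> D" using xs_D[of "k - 1"] by simp

lemma xmin: "x \<in> D \<Longrightarrow> inner (lam k) (A (xs (Suc k))) + inner (mu k) (W (xs (Suc k)))
                 + r1 / 2 * (norm (A (xs (Suc k)) - bd))\<^sup>2
                 + r2 / 2 * (norm (W (xs (Suc k)) - ys k))\<^sup>2
               \<le> inner (lam k) (A x) + inner (mu k) (W x)
                 + r1 / 2 * (norm (A x - bd))\<^sup>2
                 + r2 / 2 * (norm (W x - ys k))\<^sup>2"
  using adm unfolding noisy_admm_def by blast

lemma ymin: "f (ys (Suc k)) + ereal (- inner (mu k) (ys (Suc k))
                 + r2 / 2 * (norm (W (xs (Suc k)) - ys (Suc k)))\<^sup>2)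
               \<le> f y + ereal (- inner (mu k) y + r2 / 2 * (norm (W (xs (Suc k)) - y))\<^sup>2)"
  using adm unfolding noisy_admm_def by blast

lemma lam_rec: "lam (Suc k) = lam k + r1 *\<^sub>R r (Suc k)" using adm unfolding noisy_admm_def r_def by blast
lemma mu_rec: "mu (Suc k) = mu k + r2 *\<^sub>R s (Suc k)" using adm unfolding noisy_admm_def s_def by blast

lemma D_sub: "subspace D" using Wop unfolding dd_closed_linear_op_def by blast
lemma W_add: "x \<in> D \<Longrightarrow> z \<in> D \<Longrightarrow> W (x + z) = W x + W z" using Wop unfolding dd_closed_linear_op_def by blast
lemma W_scale: "x \<in> D \<Longrightarrow> W (a *\<^sub>R x) = a *\<^sub>R W x" using Wop unfolding dd_closed_linear_op_def by blast
lemma W_diff: assumes "x \<in> D" "z \<in> D" shows "W (x - z) = W x - W z"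
proof -
  have z': "(-1) *\<^sub>R z \<in> D" using D_sub assms(2) by (rule subspace_scale)
  have "W (x - z) = W (x + (-1) *\<^sub>R z)" by simp
  also have "\<dots> = W x + W ((-1) *\<^sub>R z)" using W_add[OF assms(1) z'] .
  also have "\<dots> = W x - W z" using W_scale[OF assms(2), of "-1"] by simp
  finally show ?thesis .
qed

lemma A_linear: "linear A" using A_lin by (rule bounded_linear.linear)
lemma A_diff: "A (x - z) = A x - A z" using A_linear by (rule linear_diff)
lemma A_add: "A (x + z) = A x + A z" using A_linear by (rule linear_add)
lemma A_scale: "A (a *\<^sub>R x) = a *\<^sub>R A x" using A_linear by (rule linear_scale)

lemma f_fin: assumes "k \<ge> 1" shows "f (ys k) = ereal (F (ys k))"
proof -
  obtain j where k: "k = Suc j" using assms by (cases k) auto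
  obtain y0 where y0: "f y0 \<noteq> \<infinity>" using prp unfolding proper_fun_def by blast
  have "f y0 \<noteq> -\<infinity>" using prp unfolding proper_fun_def by blast
  then obtain c where c: "f y0 = ereal c" using y0 by (cases "f y0") auto
  have h: "f (ys k) + ereal (- inner (mu j) (ys k) + r2 / 2 * (norm (W (xs k) - ys k))\<^sup>2)
       \<le> f y0 + ereal (- inner (mu j) y0 + r2 / 2 * (norm (W (xs k) - y0))\<^sup>2)"
    using ymin[of j y0] unfolding k by simp
  have ninf: "f (ys k) \<noteq> \<infinity>"
  proof
    assume "f (ys k) = \<infinity>"
    with h c show False by simp
  qed
  have "f (ys k) \<noteq> -\<infinity>" using prp unfolding proper_fun_def by blast
  with ninf show ?thesis unfolding F_def by (cases "f (ys k)") auto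
qed

lemma SG: assumes k: "k \<ge> 1" and fz: "f z \<noteq> \<infinity>"
  shows "F (ys k) + inner (mu k) (z - ys k) + c0/2 * (norm (z - ys k))^2 \<le> F z"
proof -
  obtain j where kj: "k = Suc j" using k by (cases k) auto
  have "f z \<noteq> -\<infinity>" using prp unfolding proper_fun_def by blast
  then obtain Fz where Fz: "f z = ereal Fz" using fz by (cases "f z") auto
  have FzF: "F z = Fz" using Fz unfolding F_def by simp
  define t where "t = c0/(2*c0+r2)"
  have t01: "0 \<le> t" "t \<le> 1" using c0 r2 unfolding t_def by (auto simp: field_simps)
  define yt where "yt = t *\<^sub>R z + (1 - t) *\<^sub>R ys k"
  have fy: "f (ys k) = ereal (F (ys k))" using f_fin k by simp
  have sc: "f yt + ereal (c0 * t * (1 - t) * (norm (z - ys k))\<^sup>2) \<le> ereal t * f z + ereal (1 - t) * f (ys k)"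
    using sconv t01 unfolding strongly_convex_def yt_def by blast
  hence sc': "f yt + ereal (c0 * t * (1 - t) * (norm (z - ys k))\<^sup>2) \<le> ereal (t*Fz + (1-t)*F (ys k))"
    unfolding Fz fy by simp
  have ytn: "f yt \<noteq> \<infinity>"
  proof
    assume "f yt = \<infinity>" with sc' show False by simp
  qed
  have "f yt \<noteq> -\<infinity>" using prp unfolding proper_fun_def by blast
  then obtain Fyt where Fyt: "f yt = ereal Fyt" using ytn by (cases "f yt") auto
  have h2: "Fyt + c0*t*(1-t)*(norm (z - ys k))^2 \<le> t*Fz + (1-t)*F (ys k)" using sc' unfolding Fyt by simp
  have mn: "f (ys k) + ereal (- inner (mu j) (ys k) + r2 / 2 * (norm (W (xs k) - ys k))\<^sup>2)
       \<le> f yt + ereal (- inner (mu j) yt + r2 / 2 * (norm (W (xs k) - yt))\<^sup>2)"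
    using ymin[of j yt] unfolding kj by simp
  hence h1': "F (ys k) + (- inner (mu j) (ys k) + r2 / 2 * (norm (W (xs k) - ys k))\<^sup>2)
       \<le> Fyt + (- inner (mu j) yt + r2 / 2 * (norm (W (xs k) - yt))\<^sup>2)"
    unfolding fy Fyt by simp
  hence h1: "F (ys k) + (- inner (mu j) (ys k) + r2 / 2 * (norm (W (xs k) - ys k))\<^sup>2)
       \<le> Fyt + (- inner (mu j) (t *\<^sub>R z + (1 - t) *\<^sub>R ys k) + r2 / 2 * (norm (W (xs k) - (t *\<^sub>R z + (1 - t) *\<^sub>R ys k)))\<^sup>2)"
    unfolding yt_def by simp
  have "F (ys k) + inner (mu j + r2 *\<^sub>R (W (xs k) - ys k)) (z - ys k) + c0/2*(norm (z - ys k))^2 \<le> Fz"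
    by (rule alg_sg[OF t_def c0 r2 h1 h2])
  moreover have "mu j + r2 *\<^sub>R (W (xs k) - ys k) = mu k" using mu_rec[of j] unfolding kj s_def by simp
  ultimately show ?thesis using FzF by simp
qed

lemma I_eq: assumes k: "k \<ge> 1" and w: "w \<in> D"
  shows "inner (lam k) (A w) + inner (mu k + r2 *\<^sub>R u k) (W w) = 0"
proof -
  obtain j where kj: "k = Suc j" using k by (cases k) auto
  have xk: "xs k \<in> D" using xs_D kj by simp
  define L where "L = inner (lam j) (A w) + inner (mu j) (W w) + r1*inner (A (xs k) - bd) (A w) + r2*inner (W (xs k) - ys j) (W w)"
  define c where "c = r1/2*(norm (A w))^2 + r2/2*(norm (W w))^2"
  have c: "c \<ge> 0" using r1 r2 unfolding c_def by simp
  have "L = 0"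
  proof (rule alg_zero[OF c])
    fix t :: real
    have xt: "xs k + t *\<^sub>R w \<in> D" using D_sub xk w by (simp add: subspace_add subspace_scale)
    have tw: "t *\<^sub>R w \<in> D" using D_sub w by (simp add: subspace_scale)
    have Ax: "A (xs k + t *\<^sub>R w) = A (xs k) + t *\<^sub>R A w" by (simp add: A_add A_scale)
    have Wx: "W (xs k + t *\<^sub>R w) = W (xs k) + t *\<^sub>R W w" using W_add[OF xk tw] W_scale[OF w] by simp
    have "inner (lam j) (A (xs k)) + inner (mu j) (W (xs k)) + r1/2*(norm (A (xs k) - bd))^2 + r2/2*(norm (W (xs k) - ys j))^2
      \<le> inner (lam j) (A (xs k + t *\<^sub>R w)) + inner (mu j) (W (xs k + t *\<^sub>R w)) + r1/2*(norm (A (xs k + t *\<^sub>R w) - bd))^2 + r2/2*(norm (W (xs k + t *\<^sub>R w) - ys j))^2"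
      using xmin[OF xt, of j] unfolding kj by simp
    also have "\<dots> = (inner (lam j) (A (xs k)) + inner (mu j) (W (xs k)) + r1/2*(norm (A (xs k) - bd))^2 + r2/2*(norm (W (xs k) - ys j))^2) + t*L + t^2*c"
      unfolding Ax Wx L_def c_def by (rule alg_quad)
    finally show "0 \<le> t*L + t^2*c" by simp
  qed
  moreover have "inner (lam k) (A w) + inner (mu k + r2 *\<^sub>R u k) (W w) = L"
  proof -
    have "lam k = lam j + r1 *\<^sub>R (A (xs k) - bd)" using lam_rec[of j] unfolding kj r_def by simp
    moreover have "mu k + r2 *\<^sub>R u k = mu j + r2 *\<^sub>R (W (xs k) - ys j)"
      using mu_rec[of j] unfolding kj s_def u_def by (simp add: algebra_simps)
    ultimately show ?thesis unfolding L_def by (simp add: inner_add_left)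
  qed
  ultimately show ?thesis by simp
qed

lemma Z_eq: assumes k: "k \<ge> 1" and w: "w \<in> D"
  shows "r1 * inner (r (Suc k)) (A w) + r2 * inner (s (Suc k) + u (Suc k) - u k) (W w) = 0"
proof -
  have a: "inner (lam (Suc k)) (A w) + inner (mu (Suc k) + r2 *\<^sub>R u (Suc k)) (W w) = 0" using I_eq[OF _ w] by simp
  have b: "inner (lam k) (A w) + inner (mu k + r2 *\<^sub>R u k) (W w) = 0" using I_eq[OF k w] .
  have "0 = (inner (lam (Suc k)) (A w) + inner (mu (Suc k) + r2 *\<^sub>R u (Suc k)) (W w)) - (inner (lam k) (A w) + inner (mu k + r2 *\<^sub>R u k) (W w))"
    using a b by simp
  also have "\<dots> = r1 * inner (r (Suc k)) (A w) + r2 * inner (s (Suc k) + u (Suc k) - u k) (W w)"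
    unfolding lam_rec mu_rec by (simp add: inner_add_left inner_diff_left algebra_simps)
  finally show ?thesis by simp
qed

lemma mono_su: assumes k: "k \<ge> 1"
  shows "c0 * (norm (u (Suc k)))^2 \<le> r2 * inner (s (Suc k)) (u (Suc k))"
proof -
  have f1: "f (ys k) \<noteq> \<infinity>" using f_fin[OF k] by simp
  have f2: "f (ys (Suc k)) \<noteq> \<infinity>" using f_fin[of "Suc k"] by simp
  have a: "F (ys (Suc k)) + inner (mu (Suc k)) (ys k - ys (Suc k)) + c0/2 * (norm (ys k - ys (Suc k)))^2 \<le> F (ys k)"
    using SG[of "Suc k", OF _ f1] by simp
  have b: "F (ys k) + inner (mu k) (ys (Suc k) - ys k) + c0/2 * (norm (ys (Suc k) - ys k))^2 \<le> F (ys (Suc k))"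
    using SG[OF k f2] .
  have n: "norm (ys k - ys (Suc k)) = norm (ys (Suc k) - ys k)" by (rule norm_minus_commute)
  have "inner (mu (Suc k)) (ys k - ys (Suc k)) + inner (mu k) (ys (Suc k) - ys k) = - r2 * inner (s (Suc k)) (u (Suc k))"
    unfolding mu_rec u_def by (simp add: inner_add_left inner_diff_right algebra_simps)
  thus ?thesis using a b n unfolding u_def by (simp add: algebra_simps)
qed

lemma Emono: assumes k: "k \<ge> 1"
  shows "EE (Suc k) + r2*(norm (s (Suc k) - s k + u (Suc k) - u k))^2 + 2*c0*(norm (u (Suc k)))^2 \<le> EE k"
proof -
  have xk: "xs k \<in> D" using xs_D' k .
  have xk1: "xs (Suc k) \<in> D" using xs_D .
  have wD: "xs (Suc k) - xs k \<in> D" using D_sub xk xk1 by (simp add: subspace_diff)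
  have Aw: "A (xs (Suc k) - xs k) = r (Suc k) - r k" unfolding A_diff r_def by simp
  have Ww: "W (xs (Suc k) - xs k) = s (Suc k) - s k + u (Suc k)" unfolding W_diff[OF xk1 xk] s_def u_def by simp
  have Z: "r1 * inner (r (Suc k)) (r (Suc k) - r k) + r2 * inner (s (Suc k) + u (Suc k) - u k) (s (Suc k) - s k + u (Suc k)) = 0"
    using Z_eq[OF k wD] unfolding Aw Ww .
  have "r1*(norm (r (Suc k)))^2 + r2*(norm (s (Suc k)))^2 + r2*(norm (u (Suc k)))^2 + r2*(norm (s (Suc k) - s k + u (Suc k) - u k))^2 + 2*r2*inner (s (Suc k)) (u (Suc k))
     \<le> r1*(norm (r k))^2 + r2*(norm (s k))^2 + r2*(norm (u k))^2"
    by (rule alg_E[OF Z r1])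
  thus ?thesis using mono_su[OF k] unfolding EE_alt by simp
qed

lemma Eanti: assumes "1 \<le> i" "i \<le> j" shows "EE j \<le> EE i"
  using assms(2)
proof (induction j)
  case 0 thus ?case using assms by simp
next
  case (Suc j)
  show ?case
  proof (cases "i = Suc j")
    case True thus ?thesis by simp
  next
    case False
    hence "i \<le> j" using Suc.prems by simp
    hence ij: "EE j \<le> EE i" using Suc.IH by simp
    have "1 \<le> j" using \<open>i \<le> j\<close> assms by simp
    from Emono[OF this] have "EE (Suc j) \<le> EE j" using r2 c0 by (smt (verit) mult_nonneg_nonneg zero_le_power2)
    thus ?thesis using ij by simp
  qed
qed

end


lemma young: fixes a b e :: real assumes "e > 0" shows "a*b \<le> e*a^2 + b^2/(4*e)"
proof -
  have "0 \<le> (2*e*a - b)^2" by simp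
  hence h: "4*e*(a*b) \<le> 4*e^2*a^2 + b^2" by (simp add: power2_eq_square algebra_simps)
  have q: "e*a^2 + b^2/(4*e) = (4*e^2*a^2 + b^2)/(4*e)" using assms by (simp add: field_simps power2_eq_square)
  have "a*b \<le> (4*e^2*a^2 + b^2)/(4*e)" using h assms by (simp add: pos_le_divide_eq algebra_simps)
  thus ?thesis using q by simp
qed

lemma young2: fixes a b :: real shows "a*b \<le> (a^2 + b^2)/2"
proof -
  have "0 \<le> (a - b)^2" by simp
  thus ?thesis by (simp add: power2_eq_square algebra_simps)
qed

lemma inner_young: fixes x y :: "'a::real_inner" assumes "e > 0"
  shows "inner x y \<le> e*(norm x)^2 + (norm y)^2/(4*e)"
  using Cauchy_Schwarz_ineq2[of x y] young[OF assms, of "norm x" "norm y"] by linarith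

lemma inner_young2: fixes x y :: "'a::real_inner"
  shows "\<bar>inner x y\<bar> \<le> ((norm x)^2 + (norm y)^2)/2"
  using Cauchy_Schwarz_ineq2[of x y] young2[of "norm x" "norm y"] by linarith

context admm
begin

definition "Dl yh k = F yh - F (ys k) - inner (mu k) (yh - ys k)"
definition "wv yh k = yh - W (xs k)"
definition "DD k = F (ys (Suc k)) - F (ys k) - inner (mu k) (u (Suc k))"

lemma DD_lb: assumes "k \<ge> 1" shows "c0/2 * (norm (u (Suc k)))^2 \<le> DD k"
proof -
  have f2: "f (ys (Suc k)) \<noteq> \<infinity>" using f_fin[of "Suc k"] by simp
  show ?thesis using SG[OF assms f2] unfolding DD_def u_def by simp
qed

lemma step_eq:
  assumes xh: "xh \<in> D" and Wx: "W xh = yh" and Ax: "A xh = b" and k: "k \<ge> 1"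
  shows "Dl yh (Suc k) = Dl yh k - DD k - r2*(norm (s (Suc k)))^2 - r1*(norm (r (Suc k)))^2
     + r1*inner (r (Suc k)) (b - bd) + r2*inner (u (Suc k)) (wv yh (Suc k)) - r2*inner (u k) (wv yh (Suc k))"
proof -
  have x1: "xs (Suc k) \<in> D" by (rule xs_D)
  have wD: "xh - xs (Suc k) \<in> D" using D_sub xh x1 by (simp add: subspace_diff)
  have Aw: "A (xh - xs (Suc k)) = (b - bd) - r (Suc k)" unfolding A_diff Ax r_def by simp
  have Ww: "W (xh - xs (Suc k)) = wv yh (Suc k)" unfolding W_diff[OF xh x1] Wx wv_def ..
  have Z: "r1 * inner (r (Suc k)) ((b - bd) - r (Suc k)) + r2 * inner (s (Suc k) + u (Suc k) - u k) (wv yh (Suc k)) = 0"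
    using Z_eq[OF k wD] unfolding Aw Ww .
  have e: "yh - ys (Suc k) = wv yh (Suc k) + s (Suc k)" unfolding wv_def s_def by simp
  have uu: "u (Suc k) = ys (Suc k) - ys k" unfolding u_def by simp
  show ?thesis unfolding Dl_def DD_def
    by (rule alg_step[OF Z mu_rec e uu])
qed

end


locale admm_stop = admm +
  fixes tau delta :: real and b and n m :: nat and xh and yh
  assumes tau: "tau > 1" and dl: "delta > 0" and bdb: "norm (bd - b) \<le> delta"
    and stop: "r1^2*(norm (r n))^2 + r2^2*(norm (s n))^2 \<le> max (r1^2) (r2^2)*tau^2*delta^2"
    and nonstop: "\<And>k. 1 \<le> k \<Longrightarrow> k < n \<Longrightarrow> r1^2*(norm (r k))^2 + r2^2*(norm (s k))^2 > max (r1^2) (r2^2)*tau^2*delta^2"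
    and m1: "1 \<le> m" and mn: "m + 1 < n" and xh: "xh \<in> D" and fyh: "f yh \<noteq> \<infinity>"
    and Ax: "A xh = b" and Wx: "W xh = yh"
begin

definition "eta = min (c0/(2*r2)) (1 - 1/tau)"
definition "Phi k = Dl yh k - r2*inner (u k) (wv yh k)"
definition "G k = (3*r2/(4*c0))*EE (k - 1) + EE k/2"
definition "V k = 2*EE k + (r2/c0)*EE (k - 1)"

lemma eta_pos: "eta > 0" using c0 r2 tau unfolding eta_def by (simp add: field_simps)

lemma beta_le: "norm (b - bd) \<le> delta" using bdb by (simp add: norm_minus_commute)

lemma inner_beta: "r1*inner (r k) (b - bd) \<le> r1*norm (r k)*delta"
proof -
  have "inner (r k) (b - bd) \<le> norm (r k) * norm (b - bd)" by (rule norm_cauchy_schwarz)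
  also have "\<dots> \<le> norm (r k) * delta" using beta_le by (simp add: mult_left_mono)
  finally show ?thesis using r1 by (simp add: mult_left_mono)
qed

lemma rdelta: assumes "1 \<le> k" "k < n" shows "r1*norm (r k)*delta \<le> (r1*(norm (r k))^2 + r2*(norm (s k))^2)/tau"
proof -
  have "r1*norm (r k)*delta*tau \<le> r1*(norm (r k))^2 + r2*(norm (s k))^2"
    by (rule disc1[OF r1 r2 tau dl norm_ge_zero norm_ge_zero nonstop[OF assms]])
  thus ?thesis using tau by (simp add: pos_le_divide_eq)
qed

lemma rdelta': assumes "1 \<le> k" "k < n" shows "r1*norm (r k)*delta \<le> EE k"
proof -
  define X where "X = r1*(norm (r k))^2 + r2*(norm (s k))^2"
  have X0: "X \<ge> 0" using r1 r2 unfolding X_def by simp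
  have "X*1 \<le> X*tau" using X0 tau by (intro mult_left_mono) auto
  hence "X/tau \<le> X" using tau by (simp add: divide_le_eq)
  moreover have "r2*(norm (u k))^2 \<ge> 0" using r2 by simp
  ultimately show ?thesis using rdelta[OF assms] unfolding EE_alt X_def by linarith
qed

lemma rdelta_n: "r1*norm (r n)*delta \<le> max r1 r2 * tau * delta^2"
  by (rule disc2[OF r1 r2 tau dl norm_ge_zero stop])

lemma budget: assumes k: "1 \<le> k" "Suc k < n"
  shows "- DD k - r2*(norm (s (Suc k)))^2 - r1*(norm (r (Suc k)))^2 + r1*inner (r (Suc k)) (b - bd) \<le> - eta * EE (Suc k)"
proof -
  define X where "X = r1*(norm (r (Suc k)))^2 + r2*(norm (s (Suc k)))^2"
  define U where "U = (norm (u (Suc k)))^2"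
  have X0: "X \<ge> 0" "U \<ge> 0" using r1 r2 unfolding X_def U_def by auto
  have a0: "r1*norm (r (Suc k))*delta \<le> X/tau" using rdelta[of "Suc k"] k unfolding X_def by simp
  have a: "r1*inner (r (Suc k)) (b - bd) \<le> X/tau" using inner_beta[of "Suc k"] a0 by linarith
  have d: "c0/2*U \<le> DD k" using DD_lb[OF k(1)] unfolding U_def .
  have e1: "eta*X \<le> (1 - 1/tau)*X" using X0 unfolding eta_def by (intro mult_right_mono) auto
  have "eta \<le> c0/(2*r2)" unfolding eta_def by simp
  hence "eta*r2 \<le> c0/(2*r2)*r2" using r2 by (intro mult_right_mono) auto
  hence e2: "eta*r2 \<le> c0/2" using r2 by simp
  have e3: "eta*r2*U \<le> c0/2*U" using e2 X0 by (intro mult_right_mono) auto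
  have EE: "eta * EE (Suc k) = eta*X + eta*r2*U" unfolding EE_alt X_def U_def by (simp add: algebra_simps)
  have Xt: "X/tau = X - (1 - 1/tau)*X" by (simp add: algebra_simps)
  have "- DD k - r2*(norm (s (Suc k)))^2 - r1*(norm (r (Suc k)))^2 + r1*inner (r (Suc k)) (b - bd) = - DD k - X + r1*inner (r (Suc k)) (b - bd)"
    unfolding X_def by simp
  also have "\<dots> \<le> - eta*X - eta*r2*U" using a d e1 e3 Xt by linarith
  finally show ?thesis using EE by linarith
qed

lemma last_step: assumes k: "1 \<le> k" "Suc k = n"
  shows "- DD k - r2*(norm (s (Suc k)))^2 - r1*(norm (r (Suc k)))^2 + r1*inner (r (Suc k)) (b - bd) \<le> max r1 r2 * tau * delta^2"
proof -
  have "0 \<le> c0/2 * (norm (u (Suc k)))^2" using c0 by simp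
  hence "0 \<le> DD k" using DD_lb[OF k(1)] by linarith
  moreover have "r1*inner (r (Suc k)) (b - bd) \<le> max r1 r2 * tau * delta^2" using inner_beta[of "Suc k"] rdelta_n k by simp
  moreover have "0 \<le> r2*(norm (s (Suc k)))^2" "0 \<le> r1*(norm (r (Suc k)))^2" using r1 r2 by auto
  ultimately show ?thesis by linarith
qed

lemma wv_Suc: "wv yh (Suc k) = wv yh k - (s (Suc k) - s k + u (Suc k))"
  unfolding wv_def s_def u_def by (simp add: algebra_simps)

lemma Phi_step: assumes k: "1 \<le> k"
  shows "Phi (Suc k) = Phi k + (- DD k - r2*(norm (s (Suc k)))^2 - r1*(norm (r (Suc k)))^2 + r1*inner (r (Suc k)) (b - bd))
     + r2*inner (u k) (s (Suc k) - s k + u (Suc k))"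
  using step_eq[OF xh Wx Ax k] unfolding Phi_def wv_Suc[of k] by (simp add: inner_diff_right algebra_simps)

lemma Phi_first: assumes k: "1 \<le> k"
  shows "Phi (Suc k) = Dl yh k + (- DD k - r2*(norm (s (Suc k)))^2 - r1*(norm (r (Suc k)))^2 + r1*inner (r (Suc k)) (b - bd))
     - r2*inner (u k) (wv yh (Suc k))"
  using step_eq[OF xh Wx Ax k] unfolding Phi_def by (simp add: algebra_simps)

lemma u_bound: assumes k: "2 \<le> k" shows "2*c0*(norm (u k))^2 \<le> EE (k - 1) - EE k"
proof -
  have "1 \<le> k - 1" using k by simp
  from Emono[OF this] have "EE k + r2*(norm (s k - s (k-1) + u k - u (k-1)))^2 + 2*c0*(norm (u k))^2 \<le> EE (k - 1)"
    using k by (simp add: Suc_diff_1[symmetric])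
  moreover have "0 \<le> r2*(norm (s k - s (k-1) + u k - u (k-1)))^2" using r2 by simp
  ultimately show ?thesis by linarith
qed

lemma g_bound: assumes k: "1 \<le> k" shows "r2*(norm (s (Suc k) - s k + u (Suc k) - u k))^2 \<le> EE k - EE (Suc k)"
proof -
  have "0 \<le> 2*c0*(norm (u (Suc k)))^2" using c0 by simp
  thus ?thesis using Emono[OF k] by linarith
qed

lemma dbound: assumes k: "2 \<le> k"
  shows "r2*inner (u k) (s (Suc k) - s k + u (Suc k)) \<le> G k - G (Suc k)"
proof -
  define g where "g = s (Suc k) - s k + u (Suc k) - u k"
  have eq: "s (Suc k) - s k + u (Suc k) = g + u k" unfolding g_def by simp
  have "inner (u k) (g + u k) = inner (u k) g + (norm (u k))^2" by (simp add: inner_add_right power2_norm_eq_inner)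
  moreover have "inner (u k) g \<le> ((norm (u k))^2 + (norm g)^2)/2" using inner_young2[of "u k" g] by simp
  ultimately have "inner (u k) (g + u k) \<le> 3/2*(norm (u k))^2 + 1/2*(norm g)^2" by simp
  hence "r2*inner (u k) (g + u k) \<le> r2*(3/2*(norm (u k))^2 + 1/2*(norm g)^2)" using r2 by (intro mult_left_mono) auto
  hence h: "r2*inner (u k) (g + u k) \<le> 3*r2/2*(norm (u k))^2 + r2/2*(norm g)^2" by (simp add: algebra_simps)
  have ub: "2*c0*(norm (u k))^2 \<le> EE (k - 1) - EE k" by (rule u_bound[OF k])
  have "3*r2/(4*c0)*(2*c0*(norm (u k))^2) \<le> 3*r2/(4*c0)*(EE (k - 1) - EE k)"
    using ub r2 c0 by (intro mult_left_mono) auto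
  moreover have "3*r2/(4*c0)*(2*c0*(norm (u k))^2) = 3*r2/2*(norm (u k))^2" using c0 by (simp add: field_simps)
  ultimately have u1: "3*r2/2*(norm (u k))^2 \<le> 3*r2/(4*c0)*(EE (k - 1) - EE k)" by simp
  have g1: "r2*(norm g)^2 \<le> EE k - EE (Suc k)" using g_bound[of k] k unfolding g_def by simp
  have G1: "G (Suc k) = 3*r2/(4*c0)*EE k + EE (Suc k)/2" unfolding G_def by simp
  have G0: "G k = 3*r2/(4*c0)*EE (k - 1) + EE k/2" unfolding G_def by simp
  have u2: "3*r2/(4*c0)*(EE (k - 1) - EE k) = 3*r2/(4*c0)*EE (k - 1) - 3*r2/(4*c0)*EE k" by (simp add: right_diff_distrib)
  show ?thesis unfolding eq using h u1 g1 G0 G1 u2 by linarith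
qed

lemma Eanti': "1 \<le> i \<Longrightarrow> i \<le> n \<Longrightarrow> EE n \<le> EE i" using Eanti by simp

lemma phase1: "Suc m \<le> q \<Longrightarrow> q \<le> n - 1 \<Longrightarrow>
   Phi q + eta*real (q - m)*EE n \<le> Dl yh m - r2*inner (u m) (wv yh (Suc m)) + G (Suc m) - G q"
proof (induction q)
  case 0 thus ?case by simp
next
  case (Suc q)
  show ?case
  proof (cases "q = m")
    case True
    have b: "- DD m - r2*(norm (s (Suc m)))^2 - r1*(norm (r (Suc m)))^2 + r1*inner (r (Suc m)) (b - bd) \<le> - eta * EE (Suc m)"
      using budget[of m] m1 mn by simp
    have "EE n \<le> EE (Suc m)" using Eanti'[of "Suc m"] mn by simp
    hence "eta*EE n \<le> eta*EE (Suc m)" using eta_pos by (simp add: mult_left_mono)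
    thus ?thesis using Phi_first[OF m1] b True by simp
  next
    case False
    hence q1: "Suc m \<le> q" "q \<le> n - 1" using Suc.prems by auto
    have IH: "Phi q + eta*real (q - m)*EE n \<le> Dl yh m - r2*inner (u m) (wv yh (Suc m)) + G (Suc m) - G q"
      using Suc.IH q1 by simp
    have q2: "1 \<le> q" "2 \<le> q" "Suc q < n" using q1 m1 Suc.prems mn by auto
    have b: "- DD q - r2*(norm (s (Suc q)))^2 - r1*(norm (r (Suc q)))^2 + r1*inner (r (Suc q)) (b - bd) \<le> - eta * EE (Suc q)"
      using budget q2 by simp
    have d: "r2*inner (u q) (s (Suc q) - s q + u (Suc q)) \<le> G q - G (Suc q)" using dbound q2 by simp
    have "EE n \<le> EE (Suc q)" using Eanti'[of "Suc q"] q2 by simp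
    hence e: "eta*EE n \<le> eta*EE (Suc q)" using eta_pos by (simp add: mult_left_mono)
    have r: "real (Suc q - m) = real (q - m) + 1" using q1 by simp
    have "Phi (Suc q) + eta*real (Suc q - m)*EE n = Phi (Suc q) + eta*real (q - m)*EE n + eta*EE n"
      unfolding r by (simp add: algebra_simps)
    thus ?thesis using Phi_step[OF q2(1)] IH b d e by simp
  qed
qed

lemma phase1_final: "Phi n + eta*real (n - 1 - m)*EE n \<le> Dl yh m - r2*inner (u m) (wv yh (Suc m)) + G (Suc m) - G n + max r1 r2 * tau * delta^2"
proof -
  define q where "q = n - 1"
  have q: "Suc m \<le> q" "q \<le> n - 1" "Suc q = n" "1 \<le> q" "2 \<le> q" using mn m1 unfolding q_def by auto
  have P: "Phi q + eta*real (q - m)*EE n \<le> Dl yh m - r2*inner (u m) (wv yh (Suc m)) + G (Suc m) - G q"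
    using phase1 q by simp
  have l: "- DD q - r2*(norm (s (Suc q)))^2 - r1*(norm (r (Suc q)))^2 + r1*inner (r (Suc q)) (b - bd) \<le> max r1 r2 * tau * delta^2"
    using last_step q by simp
  have d: "r2*inner (u q) (s (Suc q) - s q + u (Suc q)) \<le> G q - G (Suc q)" by (rule dbound[OF q(5)])
  have "Phi n = Phi (Suc q)" using q by simp
  thus ?thesis using Phi_step[OF q(4)] P l d unfolding q_def[symmetric] using q(3) by simp
qed

end


lemma norm_sum_sq: fixes x y :: "'a::real_normed_vector"
  shows "(norm (x + y))^2 \<le> 2*(norm x)^2 + 2*(norm y)^2"
proof -
  have "norm (x+y) \<le> norm x + norm y" by (rule norm_triangle_ineq)
  hence "(norm (x+y))^2 \<le> (norm x + norm y)^2" by (simp add: power_mono)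
  also have "\<dots> \<le> 2*(norm x)^2 + 2*(norm y)^2" using young2[of "norm x" "norm y"] by (simp add: power2_sum)
  finally show ?thesis .
qed

context admm_stop
begin

definition "eps = eta/2"
definition "ci = 1/(4*eps)"

lemma eps_pos: "eps > 0" using eta_pos unfolding eps_def by simp
lemma ci_pos: "ci > 0" using eps_pos unfolding ci_def by simp

lemma d_eq: "wv yh q - wv yh (Suc q) = s (Suc q) - s q + u (Suc q)"
  using wv_Suc[of q] by simp

lemma dnorm_bound: assumes q: "2 \<le> q"
  shows "r2*(norm (s (Suc q) - s q + u (Suc q)))^2 \<le> V q - V (Suc q)"
proof -
  define g where "g = s (Suc q) - s q + u (Suc q) - u q"
  have eq: "s (Suc q) - s q + u (Suc q) = g + u q" unfolding g_def by simp
  have "(norm (g + u q))^2 \<le> 2*(norm g)^2 + 2*(norm (u q))^2" by (rule norm_sum_sq)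
  hence "r2*(norm (g + u q))^2 \<le> r2*(2*(norm g)^2 + 2*(norm (u q))^2)" using r2 by (intro mult_left_mono) auto
  moreover have "r2*(2*(norm g)^2 + 2*(norm (u q))^2) = 2*(r2*(norm g)^2) + r2/c0*(2*c0*(norm (u q))^2)"
    using c0 by (simp add: algebra_simps)
  ultimately have a: "r2*(norm (g + u q))^2 \<le> 2*(r2*(norm g)^2) + r2/c0*(2*c0*(norm (u q))^2)" by simp
  have g1: "r2*(norm g)^2 \<le> EE q - EE (Suc q)" using g_bound[of q] q unfolding g_def by simp
  have u1: "2*c0*(norm (u q))^2 \<le> EE (q - 1) - EE q" by (rule u_bound[OF q])
  have u2: "r2/c0*(2*c0*(norm (u q))^2) \<le> r2/c0*(EE (q - 1) - EE q)" using u1 r2 c0 by (intro mult_left_mono) auto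
  have u3: "r2/c0*(EE (q - 1) - EE q) = r2/c0*EE (q - 1) - r2/c0*EE q" by (simp add: right_diff_distrib)
  have V: "V q - V (Suc q) = 2*EE q + r2/c0*EE (q - 1) - 2*EE (Suc q) - r2/c0*EE q" unfolding V_def by simp
  show ?thesis unfolding eq using a g1 u2 u3 V by linarith
qed

lemma dnorm_m: "r2*(norm (s (Suc m) - s m + u (Suc m)))^2 \<le> 2*(EE m - EE (Suc m)) + 2*EE m"
proof -
  define g where "g = s (Suc m) - s m + u (Suc m) - u m"
  have eq: "s (Suc m) - s m + u (Suc m) = g + u m" unfolding g_def by simp
  have "(norm (g + u m))^2 \<le> 2*(norm g)^2 + 2*(norm (u m))^2" by (rule norm_sum_sq)
  hence "r2*(norm (g + u m))^2 \<le> r2*(2*(norm g)^2 + 2*(norm (u m))^2)" using r2 by (intro mult_left_mono) auto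
  hence a: "r2*(norm (g + u m))^2 \<le> 2*(r2*(norm g)^2) + 2*(r2*(norm (u m))^2)" by (simp add: algebra_simps)
  have g1: "r2*(norm g)^2 \<le> EE m - EE (Suc m)" using g_bound[OF m1] unfolding g_def by simp
  have u1: "r2*(norm (u m))^2 \<le> EE m" by (rule EE_u)
  have "2*(r2*(norm g)^2) + 2*(r2*(norm (u m))^2) \<le> 2*(EE m - EE (Suc m)) + 2*EE m"
    using g1 u1 by (intro add_mono) auto
  thus ?thesis unfolding eq using a by (rule order_trans[rotated])
qed

lemma inner_step: "- r2*inner (u n) dd \<le> eps*(r2*(norm (u n))^2) + ci*(r2*(norm dd)^2)"
proof -
  have "inner (- u n) dd \<le> eps*(norm (- u n))^2 + (norm dd)^2/(4*eps)" by (rule inner_young[OF eps_pos])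
  hence "- inner (u n) dd \<le> eps*(norm (u n))^2 + ci*(norm dd)^2" unfolding ci_def by simp
  hence "r2*(- inner (u n) dd) \<le> r2*(eps*(norm (u n))^2 + ci*(norm dd)^2)" using r2 by (intro mult_left_mono) auto
  thus ?thesis by (simp add: algebra_simps)
qed

lemma phase2: "Suc m \<le> q \<Longrightarrow> q \<le> n \<Longrightarrow>
   - r2*inner (u n) (wv yh m - wv yh q) \<le> real (q - m)*eps*(r2*(norm (u n))^2) + ci*(4*EE m - 2*EE (Suc m) + V (Suc m) - V q)"
proof (induction q)
  case 0 thus ?case by simp
next
  case (Suc q)
  show ?case
  proof (cases "q = m")
    case True
    have i: "- r2*inner (u n) (s (Suc m) - s m + u (Suc m)) \<le> eps*(r2*(norm (u n))^2) + ci*(r2*(norm (s (Suc m) - s m + u (Suc m)))^2)"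
      by (rule inner_step)
    have "ci*(r2*(norm (s (Suc m) - s m + u (Suc m)))^2) \<le> ci*(2*(EE m - EE (Suc m)) + 2*EE m)"
      using dnorm_m ci_pos by (intro mult_left_mono) auto
    moreover have "2*(EE m - EE (Suc m)) + 2*EE m = 4*EE m - 2*EE (Suc m) + V (Suc m) - V (Suc m)" by simp
    ultimately show ?thesis using i d_eq[of m] True by simp
  next
    case False
    hence q1: "Suc m \<le> q" "q \<le> n" using Suc.prems by auto
    have IH: "- r2*inner (u n) (wv yh m - wv yh q) \<le> real (q - m)*eps*(r2*(norm (u n))^2) + ci*(4*EE m - 2*EE (Suc m) + V (Suc m) - V q)"
      using Suc.IH q1 by simp
    have q2: "2 \<le> q" using q1 m1 by simp
    have i: "- r2*inner (u n) (s (Suc q) - s q + u (Suc q)) \<le> eps*(r2*(norm (u n))^2) + ci*(r2*(norm (s (Suc q) - s q + u (Suc q)))^2)"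
      by (rule inner_step)
    have "ci*(r2*(norm (s (Suc q) - s q + u (Suc q)))^2) \<le> ci*(V q - V (Suc q))"
      using dnorm_bound[OF q2] ci_pos by (intro mult_left_mono) auto
    hence i2: "- r2*inner (u n) (s (Suc q) - s q + u (Suc q)) \<le> eps*(r2*(norm (u n))^2) + ci*(V q - V (Suc q))" using i by linarith
    have w: "wv yh m - wv yh (Suc q) = (wv yh m - wv yh q) + (s (Suc q) - s q + u (Suc q))"
      using d_eq[of q] by (simp add: algebra_simps)
    have sp: "- r2*inner (u n) (wv yh m - wv yh (Suc q)) = - r2*inner (u n) (wv yh m - wv yh q) + - r2*inner (u n) (s (Suc q) - s q + u (Suc q))"
      unfolding w by (simp add: inner_add_right algebra_simps)
    have r: "real (Suc q - m) = real (q - m) + 1" using q1 by simp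
    have e1: "real (Suc q - m)*eps*(r2*(norm (u n))^2) = real (q - m)*eps*(r2*(norm (u n))^2) + eps*(r2*(norm (u n))^2)"
      unfolding r by (simp add: algebra_simps)
    have e2: "ci*(4*EE m - 2*EE (Suc m) + V (Suc m) - V (Suc q)) = ci*(4*EE m - 2*EE (Suc m) + V (Suc m) - V q) + ci*(V q - V (Suc q))"
      by (simp add: algebra_simps)
    show ?thesis unfolding sp e1 e2 using IH i2 by linarith
  qed
qed

lemma main1:
  "Dl yh n + EE n \<le> Dl yh m + max r1 r2 * tau * delta^2 + r2*\<bar>inner (u m) (wv yh (Suc m))\<bar>
     + r2/2*(norm (wv yh m))^2 + (3*r2/(4*c0) + 2 + (4 + r2/c0)/(2*eta))*EE m"
proof -
  have P1: "Phi n + eta*real (n - 1 - m)*EE n \<le> Dl yh m - r2*inner (u m) (wv yh (Suc m)) + G (Suc m) - G n + max r1 r2 * tau * delta^2"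
    by (rule phase1_final)
  have P2: "- r2*inner (u n) (wv yh m - wv yh n) \<le> real (n - m)*eps*(r2*(norm (u n))^2) + ci*(4*EE m - 2*EE (Suc m) + V (Suc m) - V n)"
    using phase2[of n] mn by simp
  have Dn: "Dl yh n = Phi n + r2*inner (u n) (wv yh m) + - r2*inner (u n) (wv yh m - wv yh n)"
    unfolding Phi_def by (simp add: inner_diff_right algebra_simps)
  have Y0: "inner (u n) (wv yh m) \<le> ((norm (u n))^2 + (norm (wv yh m))^2)/2" using inner_young2[of "u n" "wv yh m"] by linarith
  have Y: "r2*inner (u n) (wv yh m) \<le> (r2*(norm (u n))^2)/2 + r2/2*(norm (wv yh m))^2"
    using mult_left_mono[OF Y0, of r2] r2 by (simp add: algebra_simps)
  have Un: "r2*(norm (u n))^2 \<le> EE n" by (rule EE_u)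
  have Enm: "EE n \<le> EE m" using Eanti[of m n] m1 mn by simp
  have Esm: "EE (Suc m) \<le> EE m" using Eanti[of m "Suc m"] m1 by simp
  have En0: "EE n \<ge> 0" "EE (Suc m) \<ge> 0" "EE m \<ge> 0" "EE (n - 1) \<ge> 0" by (auto intro: EE_nn)
  \<comment> \<open>absorb the count term\<close>
  have nm: "real (n - m) \<le> 2*real (n - 1 - m)" using mn by linarith
  have z1: "real (n - m)*eps*(r2*(norm (u n))^2) \<le> real (n - m)*eps*EE n"
    using Un eps_pos by (intro mult_left_mono) auto
  have z2: "real (n - m)*eps \<le> eta*real (n - 1 - m)" using nm eta_pos unfolding eps_def by (simp add: algebra_simps)
  have z3: "real (n - m)*eps*EE n \<le> eta*real (n - 1 - m)*EE n" using z2 En0 by (intro mult_right_mono) auto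
  have G1: "G (Suc m) \<le> 3*r2/(4*c0)*EE m + EE m/2" unfolding G_def using Esm by simp
  have G2: "G n \<ge> 0" unfolding G_def using En0 r2 c0 by simp
  have V1: "4*EE m - 2*EE (Suc m) + V (Suc m) - V n \<le> (4 + r2/c0)*EE m"
  proof -
    have "V n \<ge> 0" unfolding V_def using En0 r2 c0 by simp
    moreover have "V (Suc m) = 2*EE (Suc m) + r2/c0*EE m" unfolding V_def by simp
    ultimately show ?thesis by (simp add: algebra_simps)
  qed
  have V2: "ci*(4*EE m - 2*EE (Suc m) + V (Suc m) - V n) \<le> ci*((4 + r2/c0)*EE m)"
    using V1 ci_pos by (intro mult_left_mono) auto
  have V3: "ci*((4 + r2/c0)*EE m) = (4 + r2/c0)/(2*eta)*EE m" unfolding ci_def eps_def by simp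
  have ab0: "- inner (u m) (wv yh (Suc m)) \<le> \<bar>inner (u m) (wv yh (Suc m))\<bar>" by simp
  have ab: "- r2*inner (u m) (wv yh (Suc m)) \<le> r2*\<bar>inner (u m) (wv yh (Suc m))\<bar>"
    using mult_left_mono[OF ab0, of r2] r2 by simp
  have K: "(3*r2/(4*c0) + 2 + (4 + r2/c0)/(2*eta))*EE m = 3*r2/(4*c0)*EE m + 2*EE m + (4 + r2/c0)/(2*eta)*EE m"
    by (simp add: algebra_simps)
  show ?thesis unfolding K using P1 P2 Dn Y Un Enm z1 z3 G1 G2 V2 V3 ab by linarith
qed

end


context admm_stop
begin

definition "T q = inner (mu q - mu m) (yh - ys n) + r2*inner (u q - u m) (wv yh n)"

lemma T_step: assumes q: "1 \<le> q"
  shows "T (Suc q) = T q + (r2*inner (s (Suc q)) (s n) - r1*inner (r (Suc q)) ((b - bd) - r n))"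
proof -
  have n1: "1 \<le> n" using mn by simp
  have xn: "xs n \<in> D" using xs_D'[OF n1] .
  have wD: "xh - xs n \<in> D" using D_sub xh xn by (simp add: subspace_diff)
  have Aw: "A (xh - xs n) = (b - bd) - r n" unfolding A_diff Ax r_def by simp
  have Ww: "W (xh - xs n) = wv yh n" unfolding W_diff[OF xh xn] Wx wv_def ..
  have Z: "r1 * inner (r (Suc q)) ((b - bd) - r n) + r2 * inner (s (Suc q) + u (Suc q) - u q) (wv yh n) = 0"
    using Z_eq[OF q wD] unfolding Aw Ww .
  have e: "yh - ys n = wv yh n + s n" unfolding wv_def s_def by simp
  have "T (Suc q) - T q = r2*inner (s (Suc q)) (wv yh n + s n) + r2*inner (u (Suc q) - u q) (wv yh n)"
    unfolding T_def mu_rec e by (simp add: inner_add_left inner_diff_left algebra_simps)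
  also have "\<dots> = r2*inner (s (Suc q)) (s n) + r2 * inner (s (Suc q) + u (Suc q) - u q) (wv yh n)"
    by (simp add: inner_add_left inner_add_right inner_diff_left algebra_simps)
  finally show ?thesis using Z by linarith
qed

lemma term_bound: assumes q: "1 \<le> Suc q" "Suc q < n"
  shows "\<bar>r2*inner (s (Suc q)) (s n) - r1*inner (r (Suc q)) ((b - bd) - r n)\<bar> \<le> 3*EE (Suc q)"
proof -
  have En: "EE n \<le> EE (Suc q)" using Eanti[of "Suc q" n] q by simp
  have a0: "\<bar>inner (s (Suc q)) (s n)\<bar> \<le> ((norm (s (Suc q)))^2 + (norm (s n))^2)/2" by (rule inner_young2)
  have a: "\<bar>r2*inner (s (Suc q)) (s n)\<bar> \<le> (r2*(norm (s (Suc q)))^2 + r2*(norm (s n))^2)/2"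
    using mult_left_mono[OF a0, of r2] r2 by (simp add: abs_mult algebra_simps)
  have b0: "\<bar>inner (r (Suc q)) (b - bd)\<bar> \<le> norm (r (Suc q)) * delta"
    using Cauchy_Schwarz_ineq2[of "r (Suc q)" "b - bd"] beta_le
    by (smt (verit) mult_left_mono norm_ge_zero)
  have b1: "r1*\<bar>inner (r (Suc q)) (b - bd)\<bar> \<le> r1*(norm (r (Suc q)) * delta)"
    using r1 by (intro mult_left_mono[OF b0]) simp
  have b: "r1*\<bar>inner (r (Suc q)) (b - bd)\<bar> \<le> EE (Suc q)"
    using b1 rdelta'[OF q] by (simp add: mult.assoc)
  have c0': "\<bar>inner (r (Suc q)) (r n)\<bar> \<le> ((norm (r (Suc q)))^2 + (norm (r n))^2)/2" by (rule inner_young2)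
  have c: "r1*\<bar>inner (r (Suc q)) (r n)\<bar> \<le> (r1*(norm (r (Suc q)))^2 + r1*(norm (r n))^2)/2"
    using mult_left_mono[OF c0', of r1] r1 by (simp add: algebra_simps)
  have split: "r1*inner (r (Suc q)) ((b - bd) - r n) = r1*inner (r (Suc q)) (b - bd) - r1*inner (r (Suc q)) (r n)"
    by (simp add: inner_diff_right algebra_simps)
  have x1: "\<bar>r1*inner (r (Suc q)) (b - bd)\<bar> = r1*\<bar>inner (r (Suc q)) (b - bd)\<bar>" using r1 by (simp add: abs_mult)
  have x2: "\<bar>r1*inner (r (Suc q)) (r n)\<bar> = r1*\<bar>inner (r (Suc q)) (r n)\<bar>" using r1 by (simp add: abs_mult)
  have E1: "r2*(norm (s (Suc q)))^2 \<le> EE (Suc q)" "r2*(norm (s n))^2 \<le> EE n"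
    "r1*(norm (r (Suc q)))^2 \<le> EE (Suc q)" "r1*(norm (r n))^2 \<le> EE n" by (auto intro: EE_s EE_r)
  have "\<bar>r2*inner (s (Suc q)) (s n) - (r1*inner (r (Suc q)) (b - bd) - r1*inner (r (Suc q)) (r n))\<bar>
     \<le> \<bar>r2*inner (s (Suc q)) (s n)\<bar> + \<bar>r1*inner (r (Suc q)) (b - bd)\<bar> + \<bar>r1*inner (r (Suc q)) (r n)\<bar>" by argo
  hence t1: "\<bar>r2*inner (s (Suc q)) (s n) - (r1*inner (r (Suc q)) (b - bd) - r1*inner (r (Suc q)) (r n))\<bar>
     \<le> \<bar>r2*inner (s (Suc q)) (s n)\<bar> + r1*\<bar>inner (r (Suc q)) (b - bd)\<bar> + r1*\<bar>inner (r (Suc q)) (r n)\<bar>"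
    unfolding x1 x2 .
  have t2: "\<bar>r2*inner (s (Suc q)) (s n)\<bar> + r1*\<bar>inner (r (Suc q)) (b - bd)\<bar> + r1*\<bar>inner (r (Suc q)) (r n)\<bar>
     \<le> (r2*(norm (s (Suc q)))^2 + r2*(norm (s n))^2)/2 + EE (Suc q) + (r1*(norm (r (Suc q)))^2 + r1*(norm (r n))^2)/2"
    using a b c by linarith
  have t3: "(r2*(norm (s (Suc q)))^2 + r2*(norm (s n))^2)/2 + EE (Suc q) + (r1*(norm (r (Suc q)))^2 + r1*(norm (r n))^2)/2 \<le> 3*EE (Suc q)"
  proof -
    have x1: "r2*(norm (s (Suc q)))^2 + r1*(norm (r (Suc q)))^2 \<le> 2*EE (Suc q)" using E1(1) E1(3) by linarith
    have x2: "r2*(norm (s n))^2 + r1*(norm (r n))^2 \<le> 2*EE (Suc q)" using E1(2) E1(4) En by linarith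
    have "(r2*(norm (s (Suc q)))^2 + r2*(norm (s n))^2)/2 + EE (Suc q) + (r1*(norm (r (Suc q)))^2 + r1*(norm (r n))^2)/2 = ((r2*(norm (s (Suc q)))^2 + r1*(norm (r (Suc q)))^2) + (r2*(norm (s n))^2 + r1*(norm (r n))^2))/2 + EE (Suc q)"
      by (simp add: field_simps)
    thus ?thesis using x1 x2 by argo
  qed
  show ?thesis unfolding split using t1 t2 t3 by linarith
qed

lemma term_last: assumes q: "1 \<le> q" "Suc q = n"
  shows "\<bar>r2*inner (s (Suc q)) (s n) - r1*inner (r (Suc q)) ((b - bd) - r n)\<bar> \<le> max r1 r2 * tau * delta^2 + 2*EE n"
proof -
  have a0: "\<bar>inner (s (Suc q)) (s n)\<bar> \<le> ((norm (s (Suc q)))^2 + (norm (s n))^2)/2" by (rule inner_young2)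
  have a: "\<bar>r2*inner (s (Suc q)) (s n)\<bar> \<le> (r2*(norm (s (Suc q)))^2 + r2*(norm (s n))^2)/2"
    using mult_left_mono[OF a0, of r2] r2 by (simp add: abs_mult algebra_simps)
  have b0: "\<bar>inner (r (Suc q)) (b - bd)\<bar> \<le> norm (r (Suc q)) * delta"
    using Cauchy_Schwarz_ineq2[of "r (Suc q)" "b - bd"] beta_le
    by (smt (verit) mult_left_mono norm_ge_zero)
  have b1: "r1*\<bar>inner (r (Suc q)) (b - bd)\<bar> \<le> r1*(norm (r (Suc q)) * delta)"
    using r1 by (intro mult_left_mono[OF b0]) simp
  have b: "r1*\<bar>inner (r (Suc q)) (b - bd)\<bar> \<le> max r1 r2 * tau * delta^2"
    using b1 rdelta_n q(2) by (simp add: mult.assoc)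
  have c0': "\<bar>inner (r (Suc q)) (r n)\<bar> \<le> ((norm (r (Suc q)))^2 + (norm (r n))^2)/2" by (rule inner_young2)
  have c: "r1*\<bar>inner (r (Suc q)) (r n)\<bar> \<le> (r1*(norm (r (Suc q)))^2 + r1*(norm (r n))^2)/2"
    using mult_left_mono[OF c0', of r1] r1 by (simp add: algebra_simps)
  have split: "r1*inner (r (Suc q)) ((b - bd) - r n) = r1*inner (r (Suc q)) (b - bd) - r1*inner (r (Suc q)) (r n)"
    by (simp add: inner_diff_right algebra_simps)
  have x1: "\<bar>r1*inner (r (Suc q)) (b - bd)\<bar> = r1*\<bar>inner (r (Suc q)) (b - bd)\<bar>" using r1 by (simp add: abs_mult)
  have x2: "\<bar>r1*inner (r (Suc q)) (r n)\<bar> = r1*\<bar>inner (r (Suc q)) (r n)\<bar>" using r1 by (simp add: abs_mult)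
  have E1: "r2*(norm (s n))^2 \<le> EE n" "r1*(norm (r n))^2 \<le> EE n" by (auto intro: EE_s EE_r)
  have "\<bar>r2*inner (s (Suc q)) (s n) - (r1*inner (r (Suc q)) (b - bd) - r1*inner (r (Suc q)) (r n))\<bar>
     \<le> \<bar>r2*inner (s (Suc q)) (s n)\<bar> + \<bar>r1*inner (r (Suc q)) (b - bd)\<bar> + \<bar>r1*inner (r (Suc q)) (r n)\<bar>" by argo
  thus ?thesis unfolding split using a b c x1 x2 E1 q(2) by simp
qed

lemma Tbound: "m \<le> q \<Longrightarrow> q \<le> n - 1 \<Longrightarrow> \<bar>T q\<bar> \<le> 3* sum EE {m..q}"
proof (induction q)
  case 0
  hence "m = 0" by simp
  thus ?case using m1 by simp
next
  case (Suc q)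
  show ?case
  proof (cases "Suc q = m")
    case True
    have "T (Suc q) = 0" unfolding T_def True by simp
    moreover have "sum EE {m..Suc q} \<ge> 0" by (intro sum_nonneg EE_nn)
    ultimately show ?thesis by simp
  next
    case False
    hence q1: "m \<le> q" "q \<le> n - 1" using Suc.prems by auto
    have IH: "\<bar>T q\<bar> \<le> 3* sum EE {m..q}" using Suc.IH q1 by simp
    have q2: "1 \<le> q" "1 \<le> Suc q" "Suc q < n" using q1 m1 Suc.prems mn by auto
    have t: "\<bar>r2*inner (s (Suc q)) (s n) - r1*inner (r (Suc q)) ((b - bd) - r n)\<bar> \<le> 3*EE (Suc q)"
      using term_bound q2 by simp
    have sm: "sum EE {m..Suc q} = sum EE {m..q} + EE (Suc q)" using q1 by (simp add: sum.cl_ivl_Suc)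
    have tri: "\<bar>T q + (r2*inner (s (Suc q)) (s n) - r1*inner (r (Suc q)) ((b - bd) - r n))\<bar>
       \<le> \<bar>T q\<bar> + \<bar>r2*inner (s (Suc q)) (s n) - r1*inner (r (Suc q)) ((b - bd) - r n)\<bar>" by (rule abs_triangle_ineq)
    show ?thesis unfolding T_step[OF q2(1)] sm using IH t tri by argo
  qed
qed

lemma main2:
  "\<bar>inner (mu n) (yh - ys n)\<bar> \<le> \<bar>inner (mu m) (yh - ys n)\<bar> + max r1 r2 * tau * delta^2
     + 4* sum EE {m..n} + r2*(norm (wv yh n))^2"
proof -
  define q where "q = n - 1"
  have q: "m \<le> q" "q \<le> n - 1" "Suc q = n" "1 \<le> q" using mn m1 unfolding q_def by auto
  have Tq: "\<bar>T q\<bar> \<le> 3* sum EE {m..q}" using Tbound q by simp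
  have Tn: "T n = T q + (r2*inner (s (Suc q)) (s n) - r1*inner (r (Suc q)) ((b - bd) - r n))"
    using T_step[OF q(4)] q(3) by simp
  have tl: "\<bar>r2*inner (s (Suc q)) (s n) - r1*inner (r (Suc q)) ((b - bd) - r n)\<bar> \<le> max r1 r2 * tau * delta^2 + 2*EE n"
    using term_last q by simp
  have sm0: "sum EE {m..Suc q} = sum EE {m..q} + EE (Suc q)" using q(1) by (simp add: sum.cl_ivl_Suc)
  have sm: "sum EE {m..n} = sum EE {m..q} + EE n" using sm0 unfolding q(3) .
  have Tn': "inner (mu n) (yh - ys n) = inner (mu m) (yh - ys n) + T n - r2*inner (u n - u m) (wv yh n)"
    unfolding T_def by (simp add: inner_diff_left)
  have y1: "\<bar>inner (u n) (wv yh n)\<bar> \<le> ((norm (u n))^2 + (norm (wv yh n))^2)/2" by (rule inner_young2)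
  have y2: "\<bar>inner (u m) (wv yh n)\<bar> \<le> ((norm (u m))^2 + (norm (wv yh n))^2)/2" by (rule inner_young2)
  have y: "\<bar>r2*inner (u n - u m) (wv yh n)\<bar> \<le> r2*(\<bar>inner (u n) (wv yh n)\<bar> + \<bar>inner (u m) (wv yh n)\<bar>)"
    using r2 by (simp add: inner_diff_left abs_mult mult_left_mono)
  have y3: "r2*(\<bar>inner (u n) (wv yh n)\<bar> + \<bar>inner (u m) (wv yh n)\<bar>) \<le> r2*(((norm (u n))^2 + (norm (wv yh n))^2)/2 + ((norm (u m))^2 + (norm (wv yh n))^2)/2)"
  proof -
    have "\<bar>inner (u n) (wv yh n)\<bar> + \<bar>inner (u m) (wv yh n)\<bar> \<le> ((norm (u n))^2 + (norm (wv yh n))^2)/2 + ((norm (u m))^2 + (norm (wv yh n))^2)/2"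
      using y1 y2 by linarith
    thus ?thesis using r2 by (intro mult_left_mono) auto
  qed
  have y4: "r2*(((norm (u n))^2 + (norm (wv yh n))^2)/2 + ((norm (u m))^2 + (norm (wv yh n))^2)/2)
      = (r2*(norm (u n))^2)/2 + (r2*(norm (u m))^2)/2 + r2*(norm (wv yh n))^2" by (simp add: field_simps)
  have U: "r2*(norm (u n))^2 \<le> EE n" "r2*(norm (u m))^2 \<le> EE m" by (auto intro: EE_u)
  have s0: "sum EE {m..q} \<ge> 0" by (intro sum_nonneg EE_nn)
  have Em: "EE m \<le> sum EE {m..n}" using mn by (intro member_le_sum EE_nn) auto
  have En: "EE n \<ge> 0" by (rule EE_nn)
  have tri1: "\<bar>T n\<bar> \<le> \<bar>T q\<bar> + \<bar>r2*inner (s (Suc q)) (s n) - r1*inner (r (Suc q)) ((b - bd) - r n)\<bar>"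
    unfolding Tn by (rule abs_triangle_ineq)
  have tri2: "\<bar>inner (mu n) (yh - ys n)\<bar> \<le> \<bar>inner (mu m) (yh - ys n)\<bar> + \<bar>T n\<bar> + \<bar>r2*inner (u n - u m) (wv yh n)\<bar>"
    unfolding Tn' by (smt (verit) abs_triangle_ineq abs_minus_commute)
  show ?thesis using tri1 tri2 Tq tl sm y y3 y4 U s0 Em En by linarith
qed

end
definition Cc :: "real \<Rightarrow> real \<Rightarrow> real \<Rightarrow> real" where
  "Cc r2 c0 tau = 4 + r2 + (3*r2/(4*c0) + 2 + (4 + r2/c0)/(2*min (c0/(2*r2)) (1 - 1/tau)))"

lemma Cc_ge: assumes "r2 > 0" "c0 > 0" "tau > 1"
  shows "Cc r2 c0 tau \<ge> 4" "Cc r2 c0 tau \<ge> r2" "Cc r2 c0 tau \<ge> r2/2"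
    "Cc r2 c0 tau \<ge> 3*r2/(4*c0) + 2 + (4 + r2/c0)/(2*min (c0/(2*r2)) (1 - 1/tau))"
proof -
  have e: "min (c0/(2*r2)) (1 - 1/tau) > 0" using assms by (simp add: field_simps)
  have K: "3*r2/(4*c0) + 2 + (4 + r2/c0)/(2*min (c0/(2*r2)) (1 - 1/tau)) > 0"
    using assms e by (intro add_pos_pos divide_pos_pos) auto
  show "Cc r2 c0 tau \<ge> 4" "Cc r2 c0 tau \<ge> r2" "Cc r2 c0 tau \<ge> r2/2"
    "Cc r2 c0 tau \<ge> 3*r2/(4*c0) + 2 + (4 + r2/c0)/(2*min (c0/(2*r2)) (1 - 1/tau))"
    using K assms unfolding Cc_def by auto
qed

lemma core:
  fixes A :: "'x::real_inner \<Rightarrow> 'h::real_inner" and D :: "'x set" and W :: "'x \<Rightarrow> 'y::real_inner"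
    and f :: "'y \<Rightarrow> ereal" and xs :: "nat \<Rightarrow> 'x" and ys :: "nat \<Rightarrow> 'y" and lam :: "nat \<Rightarrow> 'h" and mu :: "nat \<Rightarrow> 'y"
  assumes r2: "\<rho>2 > 0" and tau: "\<tau> > 1" and c0: "c0 > 0"
  and A_lin: "bounded_linear A" and prp: "proper_fun f" and sconv: "strongly_convex f c0"
  and Wop: "dd_closed_linear_op D W" and r1: "\<rho>1 > 0"
  and dl: "\<delta> > 0" and bdb: "norm (b\<delta> - b) \<le> \<delta>"
  and adm: "noisy_admm A D W f \<rho>1 \<rho>2 b\<delta> xs ys lam mu"
  and k1: "1 \<le> k\<delta>"
  and stop: "\<rho>1\<^sup>2 * (norm (A (xs k\<delta>) - b\<delta>))\<^sup>2 + \<rho>2\<^sup>2 * (norm (W (xs k\<delta>) - ys k\<delta>))\<^sup>2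
        \<le> max (\<rho>1\<^sup>2) (\<rho>2\<^sup>2) * \<tau>\<^sup>2 * \<delta>\<^sup>2"
  and nonstop: "\<forall>k. 1 \<le> k \<and> k < k\<delta> \<longrightarrow>
        \<rho>1\<^sup>2 * (norm (A (xs k) - b\<delta>))\<^sup>2 + \<rho>2\<^sup>2 * (norm (W (xs k) - ys k))\<^sup>2
          > max (\<rho>1\<^sup>2) (\<rho>2\<^sup>2) * \<tau>\<^sup>2 * \<delta>\<^sup>2"
  and m1: "1 \<le> m" and mn: "m + 1 < k\<delta>"
  and xh: "xh \<in> D" and yhe: "yh \<in> effdom f" and Ax: "A xh = b" and Wx: "W xh = yh"
  shows "bregman f (mu k\<delta>) yh (ys k\<delta>) + ereal (1 * admm_E A W \<rho>1 \<rho>2 b\<delta> xs ys k\<delta>)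
        \<le> bregman f (mu m) yh (ys m)
           + ereal (max \<rho>1 \<rho>2 * \<tau> * \<delta>\<^sup>2
              + Cc \<rho>2 c0 \<tau> * (norm (W (xh - xs m)))\<^sup>2
              + Cc \<rho>2 c0 \<tau> * admm_E A W \<rho>1 \<rho>2 b\<delta> xs ys m
              + Cc \<rho>2 c0 \<tau> * (norm (W (xs m) - ys m))\<^sup>2
              + Cc \<rho>2 c0 \<tau> * \<bar>inner (ys (m - 1) - ys m) (W (xh - xs (Suc m)))\<bar>) \<and>
      \<bar>inner (mu k\<delta>) (ys k\<delta> - yh)\<bar>
        \<le> \<bar>inner (mu m) (ys k\<delta> - yh)\<bar> + max \<rho>1 \<rho>2 * \<tau> * \<delta>\<^sup>2
           + Cc \<rho>2 c0 \<tau> * (\<Sum>k = m..k\<delta>. admm_E A W \<rho>1 \<rho>2 b\<delta> xs ys k)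
           + Cc \<rho>2 c0 \<tau> * (norm (W (xs k\<delta> - xh)))\<^sup>2"
proof -
  interpret admm A D W f \<rho>1 \<rho>2 b\<delta> xs ys lam mu c0
    using A_lin prp sconv Wop r1 r2 c0 adm by (simp add: admm_def)
  have fyh: "f yh \<noteq> \<infinity>" using yhe unfolding effdom_def by auto
  interpret S: admm_stop A D W f \<rho>1 \<rho>2 b\<delta> xs ys lam mu c0 \<tau> \<delta> b k\<delta> m xh yh
  proof (intro admm_stop.intro admm_stop_axioms.intro)
    show "admm A D W f \<rho>1 \<rho>2 b\<delta> xs ys lam mu c0"
      using A_lin prp sconv Wop r1 r2 c0 adm by (simp add: admm_def)
    show "\<tau> > 1" "\<delta> > 0" "norm (b\<delta> - b) \<le> \<delta>" "1 \<le> m" "m + 1 < k\<delta>" "xh \<in> D" "f yh \<noteq> \<infinity>" "A xh = b" "W xh = yh"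
      using tau dl bdb m1 mn xh fyh Ax Wx by auto
    show "\<rho>1\<^sup>2 * (norm (r k\<delta>))\<^sup>2 + \<rho>2\<^sup>2 * (norm (s k\<delta>))\<^sup>2 \<le> max (\<rho>1\<^sup>2) (\<rho>2\<^sup>2) * \<tau>\<^sup>2 * \<delta>\<^sup>2"
      using stop unfolding r_def s_def .
    fix k assume "1 \<le> k" "k < k\<delta>"
    thus "\<rho>1\<^sup>2 * (norm (r k))\<^sup>2 + \<rho>2\<^sup>2 * (norm (s k))\<^sup>2 > max (\<rho>1\<^sup>2) (\<rho>2\<^sup>2) * \<tau>\<^sup>2 * \<delta>\<^sup>2"
      using nonstop unfolding r_def s_def by blast
  qed
  define C where "C = Cc \<rho>2 c0 \<tau>"
  have C: "C \<ge> 4" "C \<ge> \<rho>2" "C \<ge> \<rho>2/2" "C \<ge> 3*\<rho>2/(4*c0) + 2 + (4 + \<rho>2/c0)/(2*S.eta)"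
    using Cc_ge[OF r2 c0 tau] unfolding C_def S.eta_def by auto
  have fyh': "f yh = ereal (F yh)"
  proof -
    have "f yh \<noteq> -\<infinity>" using prp unfolding proper_fun_def by blast
    thus ?thesis using fyh unfolding F_def by (cases "f yh") auto
  qed
  have breg: "\<And>k. 1 \<le> k \<Longrightarrow> bregman f (mu k) yh (ys k) = ereal (Dl yh k)"
    unfolding bregman_def Dl_def using fyh' f_fin by simp
  have EEd: "\<And>k. admm_E A W \<rho>1 \<rho>2 b\<delta> xs ys k = EE k" unfolding EE_def ..
  have xm: "xs m \<in> D" using xs_D' m1 .
  have xn: "xs k\<delta> \<in> D" using xs_D' k1 .
  have w1: "W (xh - xs m) = wv yh m" unfolding W_diff[OF xh xm] Wx wv_def ..
  have w2: "W (xh - xs (Suc m)) = wv yh (Suc m)" unfolding W_diff[OF xh xs_D] Wx wv_def ..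
  have w3: "norm (W (xs k\<delta> - xh)) = norm (wv yh k\<delta>)" unfolding W_diff[OF xn xh] Wx wv_def by (rule norm_minus_commute)
  have um: "\<bar>inner (ys (m - 1) - ys m) (wv yh (Suc m))\<bar> = \<bar>inner (u m) (wv yh (Suc m))\<bar>"
  proof -
    have "ys (m - 1) - ys m = - u m" unfolding u_def by simp
    thus ?thesis by simp
  qed
  have M1: "Dl yh k\<delta> + EE k\<delta> \<le> Dl yh m + max \<rho>1 \<rho>2 * \<tau> * \<delta>^2 + \<rho>2*\<bar>inner (u m) (wv yh (Suc m))\<bar>
     + \<rho>2/2*(norm (wv yh m))^2 + (3*\<rho>2/(4*c0) + 2 + (4 + \<rho>2/c0)/(2*S.eta))*EE m" by (rule S.main1)
  have p1: "\<rho>2*\<bar>inner (u m) (wv yh (Suc m))\<bar> \<le> C*\<bar>inner (u m) (wv yh (Suc m))\<bar>" using C by (intro mult_right_mono) auto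
  have p2: "\<rho>2/2*(norm (wv yh m))^2 \<le> C*(norm (wv yh m))^2" using C by (intro mult_right_mono) auto
  have p3: "(3*\<rho>2/(4*c0) + 2 + (4 + \<rho>2/c0)/(2*S.eta))*EE m \<le> C*EE m" using C EE_nn by (intro mult_right_mono) auto
  have p4: "0 \<le> C*(norm (W (xs m) - ys m))^2" using C by simp
  have I1: "Dl yh k\<delta> + 1 * EE k\<delta> \<le> Dl yh m + (max \<rho>1 \<rho>2 * \<tau> * \<delta>\<^sup>2 + C*(norm (wv yh m))\<^sup>2 + C*EE m
      + C*(norm (W (xs m) - ys m))\<^sup>2 + C*\<bar>inner (u m) (wv yh (Suc m))\<bar>)"
    using M1 p1 p2 p3 p4 by linarith
  have M2: "\<bar>inner (mu k\<delta>) (yh - ys k\<delta>)\<bar> \<le> \<bar>inner (mu m) (yh - ys k\<delta>)\<bar> + max \<rho>1 \<rho>2 * \<tau> * \<delta>^2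
     + 4 * sum EE {m..k\<delta>} + \<rho>2*(norm (wv yh k\<delta>))^2" by (rule S.main2)
  have s0: "sum EE {m..k\<delta>} \<ge> 0" by (intro sum_nonneg EE_nn)
  have q1: "4 * sum EE {m..k\<delta>} \<le> C * sum EE {m..k\<delta>}" using C s0 by (intro mult_right_mono) auto
  have q2: "\<rho>2*(norm (wv yh k\<delta>))^2 \<le> C*(norm (wv yh k\<delta>))^2" using C by (intro mult_right_mono) auto
  have ab: "\<And>v. \<bar>inner v (yh - ys k\<delta>)\<bar> = \<bar>inner v (ys k\<delta> - yh)\<bar>"
  proof -
    fix v :: 'y
    have "inner v (yh - ys k\<delta>) = - inner v (ys k\<delta> - yh)" by (simp add: inner_diff_right)
    thus "\<bar>inner v (yh - ys k\<delta>)\<bar> = \<bar>inner v (ys k\<delta> - yh)\<bar>" by simp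
  qed
  have I2: "\<bar>inner (mu k\<delta>) (ys k\<delta> - yh)\<bar> \<le> \<bar>inner (mu m) (ys k\<delta> - yh)\<bar> + max \<rho>1 \<rho>2 * \<tau> * \<delta>\<^sup>2
           + C * sum EE {m..k\<delta>} + C * (norm (wv yh k\<delta>))\<^sup>2"
    using M2 q1 q2 ab[of "mu k\<delta>"] ab[of "mu m"] by linarith
  show ?thesis
    unfolding breg[OF k1] breg[OF m1] EEd w1 w2 w3 um C_def[symmetric]
    using I1 I2 by simp
qed

theorem lemma2p12:
  fixes \<rho>2 \<tau> c0 :: real
  assumes "\<rho>2 > 0" and "\<tau> > 1" and "c0 > 0"
  shows "\<exists>c C :: real. c > 0 \<and> C > 0 \<and>
    (\<forall>(A :: 'x::{real_inner,complete_space} \<Rightarrow> 'h::{real_inner,complete_space})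
       (D :: 'x set) (W :: 'x \<Rightarrow> 'y::{real_inner,complete_space}) (f :: 'y \<Rightarrow> ereal)
       (\<rho>1 :: real) (b :: 'h) (b\<delta> :: 'h) (\<delta> :: real)
       (xs :: nat \<Rightarrow> 'x) (ys :: nat \<Rightarrow> 'y) (lam :: nat \<Rightarrow> 'h) (mu :: nat \<Rightarrow> 'y)
       (k\<delta> :: nat) (m :: nat) (xh :: 'x) (yh :: 'y).
      bounded_linear A \<and>
      proper_fun f \<and> lsc_fun f \<and> strongly_convex f c0 \<and>
      dd_closed_linear_op D W \<and>
      (\<exists>c1 > 0. \<forall>x\<in>D. (norm (A x))\<^sup>2 + (norm (W x))\<^sup>2 \<ge> c1 * (norm x)\<^sup>2) \<and>
      \<rho>1 > 0 \<and>
      (\<exists>x\<in>D. A x = b \<and> W x \<in> effdom f) \<and>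
      \<delta> > 0 \<and> norm (b\<delta> - b) \<le> \<delta> \<and>
      noisy_admm A D W f \<rho>1 \<rho>2 b\<delta> xs ys lam mu \<and>
      1 \<le> k\<delta> \<and>
      \<rho>1\<^sup>2 * (norm (A (xs k\<delta>) - b\<delta>))\<^sup>2 + \<rho>2\<^sup>2 * (norm (W (xs k\<delta>) - ys k\<delta>))\<^sup>2
        \<le> max (\<rho>1\<^sup>2) (\<rho>2\<^sup>2) * \<tau>\<^sup>2 * \<delta>\<^sup>2 \<and>
      (\<forall>k. 1 \<le> k \<and> k < k\<delta> \<longrightarrow>
        \<rho>1\<^sup>2 * (norm (A (xs k) - b\<delta>))\<^sup>2 + \<rho>2\<^sup>2 * (norm (W (xs k) - ys k))\<^sup>2
          > max (\<rho>1\<^sup>2) (\<rho>2\<^sup>2) * \<tau>\<^sup>2 * \<delta>\<^sup>2) \<and>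
      1 \<le> m \<and> m + 1 < k\<delta> \<and>
      xh \<in> D \<and> yh \<in> effdom f \<and> A xh = b \<and> W xh = yh
      \<longrightarrow>
      bregman f (mu k\<delta>) yh (ys k\<delta>) + ereal (c * admm_E A W \<rho>1 \<rho>2 b\<delta> xs ys k\<delta>)
        \<le> bregman f (mu m) yh (ys m)
           + ereal (max \<rho>1 \<rho>2 * \<tau> * \<delta>\<^sup>2
              + C * (norm (W (xh - xs m)))\<^sup>2
              + C * admm_E A W \<rho>1 \<rho>2 b\<delta> xs ys m
              + C * (norm (W (xs m) - ys m))\<^sup>2
              + C * \<bar>inner (ys (m - 1) - ys m) (W (xh - xs (Suc m)))\<bar>) \<and>
      \<bar>inner (mu k\<delta>) (ys k\<delta> - yh)\<bar>
        \<le> \<bar>inner (mu m) (ys k\<delta> - yh)\<bar> + max \<rho>1 \<rho>2 * \<tau> * \<delta>\<^sup>2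
           + C * (\<Sum>k = m..k\<delta>. admm_E A W \<rho>1 \<rho>2 b\<delta> xs ys k)
           + C * (norm (W (xs k\<delta> - xh)))\<^sup>2)"
proof -
  have Cpos: "Cc \<rho>2 c0 \<tau> > 0" using Cc_ge(1)[OF assms(1) assms(3) assms(2)] by simp
  show ?thesis
    apply (rule exI[of _ 1], rule exI[of _ "Cc \<rho>2 c0 \<tau>"])
    apply (intro conjI)
      apply simp
     apply (rule Cpos)
    apply (intro allI impI)
    apply (elim conjE)
    apply (rule core[OF assms])
                   apply assumption+
    done
qed

end
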